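(* Let $F$ be a generic, supertransversal fully-connected ReLU network with input dimension $n_0$ and at least $n_0$ hidden units in its first layer. Let $2\le k\le m+1$ and let $C$ be a cell of $\mathcal{C}(F_{(k-1)})$. Then for every $i\le k$ and every $j$, the node map $F_{ij}$ restricted to $C$ is affine; let $A_{ij}:\mathbb{R}^{n_0}\to\mathbb{R}$ denote the corresponding affine map. Then: (1) Every $0$-cell of $\mathcal{C}(F_{(k)})$ which is contained in the closure of $C$ and which is not a $0$-cell of $\mathcal{C}(F_{(k-1)})$ is the solution of a system of $n_0$ affine equations, of which $\ell$ (with $1\le\ell\le n_0$) are of the form $A_{kj}(x)=0$ and $n_0-\ell$ (with $0\le n_0-\ell\le n_0-1$) are of the form $A_{ij}(x)=0$ with $i<k$, where the latter $n_0-\ell$ maps $A_{ij}$ are such that there exists a vertex of $C$ in the intersection of the corresponding bent hyperplanes (that is, these equations describe the affine span of a face of $C$). (2) A solution $x$ of a system of equations as described in (1) is a $0$-cell of $\mathcal{C}(F_{(k)})$ contained in the closure of $C$ if and only if $s_{ij}(x)=s_{ij}(C)$ for all remaining pairs $(i,j)$ with $i\le k-1$ (those not among the equations of the system).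
   Context: A ReLU network of architecture $(n_0,\dots,n_m,1)$: affine maps $A_i:\mathbb{R}^{n_{i-1}}\to\mathbb{R}^{n_i}$, $1\le i\le m+1$, $n_{m+1}=1$; $F_i=\mathrm{ReLU}\circ A_i$ ($i\le m$), $G=A_{m+1}$, $F=G\circ F_m\circ\cdots\circ F_1$, $F_{(k)}=F_k\circ\cdots\circ F_1$ ($F_{(0)}=\mathrm{id}$; for $k=m+1$ the last map is $G$), $F^{(k)}=G\circ F_m\circ\cdots\circ F_k$ ($F^{(m+1)}=G$). Node maps $F_{ij}=\pi_j\circ A_i\circ F_{(i-1)}:\mathbb{R}^{n_0}\to\mathbb{R}$, $1\le i\le m+1$, $1\le j\le n_i$. Bent hyperplane: $F_{ij}^{-1}(0)$. For a point $x$, $s_{ij}(x)=\mathrm{sgn}(F_{ij}(x))$; for a cell $C$, $s_{ij}(C)=\mathrm{sgn}(F_{ij}(y))$ for $y$ in the relative interior of $C$. Polyhedra are finite intersections of closed half-spaces. $R^{(i)}$ is the polyhedral complex on $\mathbb{R}^{n_{i-1}}$ induced by the hyperplanes $H_{ij}=\{\pi_jA_i=0\}$ (cells: nonempty intersections of one choice among $\{\pi_jA_i\ge0\},\{\pi_jA_i\le0\},\{\pi_jA_i=0\}$ for each $j$). Canonical polyhedral complexes: $\mathcal{C}(F_{(1)})=R^{(1)}$, $\mathcal{C}(F_{(k)})=\{C\cap F_{(k-1)}^{-1}(R)\neq\emptyset: C\in\mathcal{C}(F_{(k-1)}),R\in R^{(k)}\}$, $2\le k\le m+1$; likewise $\mathcal{C}(F^{(k)})$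 on $\mathbb{R}^{n_{k-1}}$, $\mathcal{C}(F^{(m+1)})=R^{(m+1)}$. Generic: for every $i$, any $k$ of the hyperplanes $H_{i1},\dots,H_{in_i}$ meet in an affine subspace of dimension $n_{i-1}-k$ (empty if $k>n_{i-1}$). Supertransversal: for every $1\le i\le m$, the restriction of $F_i$ to the relative interior of each cell of $R^{(i)}$ is transverse to the relative interior of every cell of $\mathcal{C}(F^{(i+1)})$. *)

theory Defs
  imports "HOL-Analysis.Analysis" "HOL-Library.Function_Algebras"
begin

text \<open>Since the layer widths n_0, ..., n_{m+1} vary, R^n is represented inside the
type nat => real as the set of sequences vanishing from index n on.
Topological notions (closure) use the product topology of nat => real, which
induces the Euclidean topology on each such R^n.\<close>

type_synonym vect = "nat \<Rightarrow> real"

definition Rn :: "nat \<Rightarrow> vect set" where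
  "Rn n = {x. \<forall>l\<ge>n. x l = 0}"

definition fscale :: "real \<Rightarrow> vect \<Rightarrow> vect" where
  "fscale c x = (\<lambda>l. c * x l)"

lemma vector_space_fscale: "vector_space fscale"
  by unfold_locales (auto simp: fscale_def algebra_simps)

abbreviation fspan :: "vect set \<Rightarrow> vect set" where
  "fspan \<equiv> module.span fscale"

abbreviation fdim :: "vect set \<Rightarrow> nat" where
  "fdim \<equiv> vector_space.dim fscale"

definition affine_comb :: "(vect \<Rightarrow> real) \<Rightarrow> vect set \<Rightarrow> vect" where
  "affine_comb c T = (\<lambda>l. \<Sum>t\<in>T. c t * t l)"

definition faff :: "vect set \<Rightarrow> vect set" where
  "faff S = {y. \<exists>T c. finite T \<and> T \<subseteq> S \<and> T \<noteq> {} \<and> sum c T = 1 \<and> y = affine_comb c T}"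

definition affdim :: "vect set \<Rightarrow> nat" where
  "affdim K = fdim ((\<lambda>y. y - (SOME x. x \<in> K)) ` K)"

definition frelint :: "vect set \<Rightarrow> vect set" where
  "frelint S = {x \<in> S. \<exists>e>0. \<forall>y\<in>faff S. (\<forall>l. \<bar>y l - x l\<bar> < e) \<longrightarrow> y \<in> S}"

definition affine_fun_on :: "vect set \<Rightarrow> (vect \<Rightarrow> real) \<Rightarrow> bool" where
  "affine_fun_on S f \<longleftrightarrow>
     (\<forall>T c. finite T \<and> T \<subseteq> S \<and> T \<noteq> {} \<and> sum c T = 1 \<longrightarrow>
        f (affine_comb c T) = (\<Sum>t\<in>T. c t * f t))"

definition is_vertex :: "vect \<Rightarrow> vect set \<Rightarrow> bool" where
  "is_vertex u C \<longleftrightarrow> u \<in> C \<and>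
     \<not> (\<exists>a\<in>C. \<exists>b\<in>C. a \<noteq> b \<and> (\<exists>t. 0 < t \<and> t < 1 \<and> u = (\<lambda>l. (1 - t) * a l + t * b l)))"

text \<open>A network of architecture (n_0, ..., n_m, 1): depth m, widths dims i,
weights wt i j l (layer i, output j, input l), biases bs i j; layers i = 1..m+1.\<close>
record net =
  depth :: nat
  dims :: "nat \<Rightarrow> nat"
  wt :: "nat \<Rightarrow> nat \<Rightarrow> nat \<Rightarrow> real"
  bs :: "nat \<Rightarrow> nat \<Rightarrow> real"

definition wf_net :: "net \<Rightarrow> bool" where
  "wf_net N \<longleftrightarrow> dims N (depth N + 1) = 1 \<and> (\<forall>i\<le>depth N + 1. 0 < dims N i)"

definition aff_layer :: "net \<Rightarrow> nat \<Rightarrow> vect \<Rightarrow> vect" where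
  "aff_layer N i x = (\<lambda>j. if j < dims N i
      then (\<Sum>l<dims N (i - 1). wt N i j l * x l) + bs N i j else 0)"

definition relu_v :: "vect \<Rightarrow> vect" where
  "relu_v y = (\<lambda>j. max 0 (y j))"

definition layer :: "net \<Rightarrow> nat \<Rightarrow> vect \<Rightarrow> vect" where
  "layer N i = (if i \<le> depth N then relu_v \<circ> aff_layer N i else aff_layer N i)"

fun comp :: "net \<Rightarrow> nat \<Rightarrow> nat \<Rightarrow> vect \<Rightarrow> vect" where
  "comp N a 0 = id"
| "comp N a (Suc b) = (if Suc b < a then id else layer N (Suc b) \<circ> comp N a b)"

text \<open>F_{(k)} = comp N 1 k;  node maps F_{ij} = pi_j o A_i o F_{(i-1)}\<close>
definition node :: "net \<Rightarrow> nat \<Rightarrow> nat \<Rightarrow> vect \<Rightarrow> real" where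
  "node N i j x = aff_layer N i (comp N 1 (i - 1) x) j"

text \<open>sign choice s: 0 means {=0}, positive means {>=0}, negative means {<=0}\<close>
definition sign_ok :: "int \<Rightarrow> real \<Rightarrow> bool" where
  "sign_ok s v \<longleftrightarrow> (if s = 0 then v = 0 else 0 \<le> real_of_int s * v)"

definition hyp_cells :: "net \<Rightarrow> nat \<Rightarrow> vect set set" where
  "hyp_cells N i = {R. R \<noteq> {} \<and> (\<exists>\<sigma>::nat \<Rightarrow> int. (\<forall>j. \<sigma> j \<in> {-1, 0, 1}) \<and>
      R = {y \<in> Rn (dims N (i - 1)). \<forall>j<dims N i. sign_ok (\<sigma> j) (aff_layer N i y j)})}"

text \<open>canon N a d: canonical polyhedral complex (on R^{n_{a-1}}) of the composite
of layers a, ..., a+d.  Thus C(F_{(k)}) = canon N 1 (k-1) and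
C(F^{(k)}) = canon N k (m+1-k).\<close>
fun canon :: "net \<Rightarrow> nat \<Rightarrow> nat \<Rightarrow> vect set set" where
  "canon N a 0 = hyp_cells N a"
| "canon N a (Suc d) = {D. D \<noteq> {} \<and> (\<exists>C R. C \<in> canon N a d \<and> R \<in> hyp_cells N (a + d + 1) \<and>
      D = C \<inter> comp N a (a + d) -` R)}"

definition sgn_pt :: "net \<Rightarrow> nat \<Rightarrow> nat \<Rightarrow> vect \<Rightarrow> real" where
  "sgn_pt N i j x = sgn (node N i j x)"

definition sgn_cell :: "net \<Rightarrow> nat \<Rightarrow> nat \<Rightarrow> vect set \<Rightarrow> real" where
  "sgn_cell N i j C = sgn (node N i j (SOME y. y \<in> frelint C))"

definition generic :: "net \<Rightarrow> bool" where
  "generic N \<longleftrightarrow> (\<forall>i\<in>{1..depth N + 1}. \<forall>S\<subseteq>{..<dims N i}.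
     (let K = {y \<in> Rn (dims N (i - 1)). \<forall>j\<in>S. aff_layer N i y j = 0} in
       (card S \<le> dims N (i - 1) \<longrightarrow> K \<noteq> {} \<and> affdim K = dims N (i - 1) - card S) \<and>
       (dims N (i - 1) < card S \<longrightarrow> K = {})))"

text \<open>Transversality of the affine map f|_{relint R} to the (relatively open, flat)
submanifold relint D of R^n: at every x in relint R with f x in relint D, the image of
the tangent space of relint R under the differential of f (for a map affine on R this is
the span of the differences f y - f x, y in relint R) plus the tangent space of relint D
(span of differences of its points) is all of R^n.\<close>
definition transverse_on :: "(vect \<Rightarrow> vect) \<Rightarrow> vect set \<Rightarrow> vect set \<Rightarrow> nat \<Rightarrow> bool" where
  "transverse_on f R D n \<longleftrightarrow> (\<forall>x\<in>frelint R. f x \<in> frelint D \<longrightarrow>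
     fspan ({f y - f x | y. y \<in> frelint R} \<union> {z - w | z w. z \<in> frelint D \<and> w \<in> frelint D})
       = Rn n)"

definition supertransversal :: "net \<Rightarrow> bool" where
  "supertransversal N \<longleftrightarrow> (\<forall>i\<in>{1..depth N}. \<forall>R\<in>hyp_cells N i.
     \<forall>D\<in>canon N (i + 1) (depth N - i). transverse_on (layer N i) R D (dims N i))"

end

theory Submission
  imports Defs
begin

interpretation fv: vector_space fscale by (rule vector_space_fscale)

primrec prv :: "net \<Rightarrow> nat \<Rightarrow> nat \<Rightarrow> vect \<Rightarrow> vect" where
  "prv N a 0 y = aff_layer N a y"
| "prv N a (Suc e) y = aff_layer N (a + e + 1) (relu_v (prv N a e y))"

lemma aff_beyond: "dims N i \<le> j \<Longrightarrow> aff_layer N i x j = 0"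
  by (simp add: aff_layer_def)

lemma prv_beyond: "dims N (a + e) \<le> j \<Longrightarrow> prv N a e y j = 0"
  by (cases e) (simp_all add: aff_layer_def)

lemma aff_Rn: "aff_layer N i x \<in> Rn (dims N i)"
  by (simp add: Rn_def aff_layer_def)

lemma relu_Rn: "x \<in> Rn n \<Longrightarrow> relu_v x \<in> Rn n"
  by (simp add: Rn_def relu_v_def)

lemma prv_Rn: "prv N a e y \<in> Rn (dims N (a + e))"
  by (cases e) (simp_all add: aff_Rn)

lemma comp_id: "1 \<le> a \<Longrightarrow> comp N a (a - 1) = id"
  by (cases "a - 1") auto

lemma comp_prv: "1 \<le> a \<Longrightarrow> a + e \<le> depth N \<Longrightarrow> comp N a (a + e) y = relu_v (prv N a e y)"
proof (induction e)
  case 0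
  have "comp N a a = layer N a \<circ> comp N a (a - 1)"
    using 0 by (cases a) auto
  moreover have "comp N a (a - 1) = id" using 0(1) by (rule comp_id)
  ultimately show ?case using 0 by (simp add: layer_def)
next
  case (Suc e)
  have "comp N a (a + Suc e) = layer N (a + e + 1) \<circ> comp N a (a + e)"
    by simp
  then show ?case using Suc by (simp add: layer_def)
qed

lemma node_prv: assumes "1 \<le> i" "i \<le> depth N + 1" shows "node N i j y = prv N 1 (i - 1) y j"
proof (cases i)
  case 0 then show ?thesis using assms by simp
next
  case (Suc e)
  show ?thesis
  proof (cases e)
    case 0 then show ?thesis using Suc by (simp add: node_def)
  next
    case (Suc e')
    have "comp N 1 (1 + e') y = relu_v (prv N 1 e' y)"
      using assms Suc \<open>i = Suc e\<close> by (intro comp_prv) auto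
    then show ?thesis using Suc \<open>i = Suc e\<close> by (simp add: node_def)
  qed
qed

lemma prv_shift: "prv N a (Suc e) y = prv N (Suc a) e (relu_v (aff_layer N a y))"
  by (induction e) simp_all

definition Scell :: "net \<Rightarrow> nat \<Rightarrow> nat \<Rightarrow> (nat \<Rightarrow> nat \<Rightarrow> int) \<Rightarrow> vect set" where
  "Scell N a d \<sigma> = {y \<in> Rn (dims N (a - 1)). \<forall>e\<le>d. \<forall>j<dims N (a + e). sign_ok (\<sigma> e j) (prv N a e y j)}"

definition sigv :: "(nat \<Rightarrow> nat \<Rightarrow> int) \<Rightarrow> bool" where
  "sigv \<sigma> \<longleftrightarrow> (\<forall>e j. \<sigma> e j \<in> {-1, 0, 1})"

lemma canon_Scell:
  assumes "1 \<le> a" "a + d \<le> depth N + 1" "C \<in> canon N a d"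
  shows "\<exists>\<sigma>. sigv \<sigma> \<and> C = Scell N a d \<sigma>"
  using assms
proof (induction d arbitrary: C)
  case 0
  then obtain \<tau> where t: "\<forall>j. \<tau> j \<in> {-1, 0, 1}"
    "C = {y \<in> Rn (dims N (a - 1)). \<forall>j<dims N a. sign_ok (\<tau> j) (aff_layer N a y j)}"
    by (auto simp: hyp_cells_def)
  show ?case
    by (rule exI[of _ "\<lambda>e j. \<tau> j"]) (use t in \<open>auto simp: sigv_def Scell_def\<close>)
next
  case (Suc d)
  have "\<exists>C' R. C' \<in> canon N a d \<and> R \<in> hyp_cells N (a + d + 1) \<and> C = C' \<inter> comp N a (a + d) -` R"
    using Suc.prems(3) by simp
  then obtain C' R where CR: "C' \<in> canon N a d" "R \<in> hyp_cells N (a + d + 1)"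
    "C = C' \<inter> comp N a (a + d) -` R" by blast
  have "\<exists>\<sigma>. sigv \<sigma> \<and> C' = Scell N a d \<sigma>" by (rule Suc.IH) (use Suc.prems CR in auto)
  then obtain \<sigma> where s: "sigv \<sigma>" "C' = Scell N a d \<sigma>" by blast
  obtain \<tau> where t: "\<forall>j. \<tau> j \<in> {-1, 0, 1}"
    "R = {y \<in> Rn (dims N (a + d)). \<forall>j<dims N (a + d + 1). sign_ok (\<tau> j) (aff_layer N (a + d + 1) y j)}"
    using CR by (auto simp: hyp_cells_def)
  have cp: "comp N a (a + d) y = relu_v (prv N a d y)" for y
    using Suc.prems by (intro comp_prv) auto
  have rn: "relu_v (prv N a d y) \<in> Rn (dims N (a + d))" for y
    by (rule relu_Rn) (rule prv_Rn)
  let ?s = "\<sigma>(Suc d := \<tau>)"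
  have "C = Scell N a (Suc d) ?s"
    unfolding CR(3) s(2) t(2) Scell_def
    using cp rn by (auto simp: le_Suc_eq)
  moreover have "sigv ?s" using s(1) t(1) by (auto simp: sigv_def)
  ultimately show ?case by blast
qed

lemma Scell_canon:
  assumes "1 \<le> a" "a + d \<le> depth N + 1" "sigv \<sigma>" "Scell N a d \<sigma> \<noteq> {}"
  shows "Scell N a d \<sigma> \<in> canon N a d"
  using assms
proof (induction d)
  case 0
  have "Scell N a 0 \<sigma> = {y \<in> Rn (dims N (a - 1)). \<forall>j<dims N a. sign_ok (\<sigma> 0 j) (aff_layer N a y j)}"
    by (auto simp: Scell_def)
  moreover have "\<forall>j. \<sigma> 0 j \<in> {-1, 0, 1}" using 0 by (auto simp: sigv_def)
  ultimately show ?case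
    using 0 unfolding hyp_cells_def canon.simps by blast
next
  case (Suc d)
  have cp: "comp N a (a + d) y = relu_v (prv N a d y)" for y
    using Suc.prems by (intro comp_prv) auto
  have rn: "relu_v (prv N a d y) \<in> Rn (dims N (a + d))" for y
    by (rule relu_Rn) (rule prv_Rn)
  let ?R = "{y \<in> Rn (dims N (a + d)). \<forall>j<dims N (a + d + 1). sign_ok (\<sigma> (Suc d) j) (aff_layer N (a + d + 1) y j)}"
  have eq: "Scell N a (Suc d) \<sigma> = Scell N a d \<sigma> \<inter> comp N a (a + d) -` ?R"
    unfolding Scell_def using cp rn by (auto simp: le_Suc_eq)
  have ne: "Scell N a d \<sigma> \<noteq> {}" using Suc.prems(4) eq by auto
  have C: "Scell N a d \<sigma> \<in> canon N a d" using Suc ne by auto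
  have "?R \<noteq> {}" using Suc.prems(4) eq by auto
  then have R: "?R \<in> hyp_cells N (a + d + 1)"
    using Suc.prems(3) unfolding hyp_cells_def sigv_def by auto
  show ?case unfolding canon.simps using C R eq Suc.prems(4) by blast
qed

primrec lino :: "net \<Rightarrow> nat \<Rightarrow> (nat \<Rightarrow> nat \<Rightarrow> bool) \<Rightarrow> nat \<Rightarrow> vect \<Rightarrow> vect" where
  "lino N a \<mu> 0 y = aff_layer N a y"
| "lino N a \<mu> (Suc e) y = aff_layer N (a + e + 1) (\<lambda>l. if \<mu> e l then lino N a \<mu> e y l else 0)"

definition mk :: "(nat \<Rightarrow> nat \<Rightarrow> int) \<Rightarrow> nat \<Rightarrow> nat \<Rightarrow> bool" where
  "mk \<sigma> e l \<longleftrightarrow> \<sigma> e l = 1"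

lemma lino_beyond: "dims N (a + e) \<le> j \<Longrightarrow> lino N a \<mu> e y j = 0"
  by (cases e) (simp_all add: aff_layer_def)

lemma relu_mask:
  assumes "s \<in> {-1, 0, 1}" "sign_ok s v"
  shows "max 0 v = (if s = 1 then v else 0)"
  using assms by (auto simp: sign_ok_def)

lemma relu_vec_mask:
  assumes "sigv \<sigma>" "\<forall>j<dims N (a + e). sign_ok (\<sigma> e j) (v j)" "\<forall>j. dims N (a + e) \<le> j \<longrightarrow> v j = 0"
  shows "relu_v v = (\<lambda>l. if mk \<sigma> e l then v l else 0)"
proof
  fix l
  show "relu_v v l = (if mk \<sigma> e l then v l else 0)"
  proof (cases "l < dims N (a + e)")
    case True
    then show ?thesis using relu_mask[of "\<sigma> e l" "v l"] assms
      by (auto simp: relu_v_def mk_def sigv_def)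
  next
    case False
    then show ?thesis using assms(3) by (auto simp: relu_v_def)
  qed
qed

lemma LC1:
  assumes "sigv \<sigma>" "\<forall>e<d. \<forall>j<dims N (a + e). sign_ok (\<sigma> e j) (prv N a e y j)"
  shows "prv N a d y = lino N a (mk \<sigma>) d y"
  using assms(2)
proof (induction d)
  case 0 then show ?case by simp
next
  case (Suc d)
  have ih: "prv N a d y = lino N a (mk \<sigma>) d y" using Suc by auto
  have r: "relu_v (prv N a d y) = (\<lambda>l. if mk \<sigma> d l then prv N a d y l else 0)"
    by (rule relu_vec_mask[OF assms(1)]) (use Suc.prems prv_beyond in auto)
  have "prv N a (Suc d) y = aff_layer N (a + d + 1) (relu_v (prv N a d y))" by simp
  also have "\<dots> = aff_layer N (a + d + 1) (\<lambda>l. if mk \<sigma> d l then prv N a d y l else 0)" by (simp only: r)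
  also have "\<dots> = lino N a (mk \<sigma>) (Suc d) y" by (simp only: ih lino.simps)
  finally show ?case .
qed

lemma LC2:
  assumes "sigv \<sigma>" "\<forall>e<d. \<forall>j<dims N (a + e). sign_ok (\<sigma> e j) (lino N a (mk \<sigma>) e y j)"
  shows "prv N a d y = lino N a (mk \<sigma>) d y"
  using assms(2)
proof (induction d)
  case 0 then show ?case by simp
next
  case (Suc d)
  have ih: "prv N a d y = lino N a (mk \<sigma>) d y" using Suc by auto
  have r: "relu_v (prv N a d y) = (\<lambda>l. if mk \<sigma> d l then prv N a d y l else 0)"
    by (rule relu_vec_mask[OF assms(1)]) (use Suc.prems prv_beyond lino_beyond ih in auto)
  have "prv N a (Suc d) y = aff_layer N (a + d + 1) (relu_v (prv N a d y))" by simp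
  also have "\<dots> = aff_layer N (a + d + 1) (\<lambda>l. if mk \<sigma> d l then prv N a d y l else 0)" by (simp only: r)
  also have "\<dots> = lino N a (mk \<sigma>) (Suc d) y" by (simp only: ih lino.simps)
  finally show ?case .
qed

definition aform :: "nat \<Rightarrow> (vect \<Rightarrow> real) \<Rightarrow> bool" where
  "aform n f \<longleftrightarrow> (\<exists>c b. \<forall>y. f y = (\<Sum>l<n. c l * y l) + b)"

lemma aform_const: "aform n (\<lambda>y. b)"
  unfolding aform_def by (rule exI[of _ "\<lambda>l. 0"]) auto

lemma aform_coord: assumes "l < n" shows "aform n (\<lambda>y. y l)"
  unfolding aform_def
proof (rule exI[of _ "\<lambda>i. if i = l then 1 else 0"], rule exI[of _ 0], rule allI)
  fix y :: vect
  have "(\<Sum>i<n. (if i = l then 1 else 0) * y i) = (\<Sum>i<n. if i = l then y i else 0)"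
    by (rule sum.cong) auto
  also have "\<dots> = y l" using assms by simp
  finally show "y l = (\<Sum>i<n. (if i = l then 1 else 0) * y i) + 0" by simp
qed

lemma aform_if: "aform n f \<Longrightarrow> aform n g \<Longrightarrow> aform n (\<lambda>y. if P then f y else g y)"
  by (cases P) auto

lemma aform_add: "aform n f \<Longrightarrow> aform n g \<Longrightarrow> aform n (\<lambda>y. f y + g y)"
  unfolding aform_def
proof (elim exE)
  fix c b c' b'
  assume f: "\<forall>y. f y = (\<Sum>l<n. c l * y l) + b" and g: "\<forall>y. g y = (\<Sum>l<n. c' l * y l) + b'"
  show "\<exists>c b. \<forall>y. f y + g y = (\<Sum>l<n. c l * y l) + b"
    by (rule exI[of _ "\<lambda>l. c l + c' l"], rule exI[of _ "b + b'"])
       (simp add: f g algebra_simps sum.distrib)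
qed

lemma aform_cmul: "aform n f \<Longrightarrow> aform n (\<lambda>y. r * f y)"
  unfolding aform_def
proof (elim exE)
  fix c b
  assume f: "\<forall>y. f y = (\<Sum>l<n. c l * y l) + b"
  show "\<exists>c b. \<forall>y. r * f y = (\<Sum>l<n. c l * y l) + b"
    by (rule exI[of _ "\<lambda>l. r * c l"], rule exI[of _ "r * b"])
       (simp add: f algebra_simps sum_distrib_left)
qed

lemma aform_sum: "finite I \<Longrightarrow> (\<And>i. i \<in> I \<Longrightarrow> aform n (f i)) \<Longrightarrow> aform n (\<lambda>y. \<Sum>i\<in>I. f i y)"
  by (induction I rule: finite_induct) (auto intro: aform_add aform_const)

lemma aform_aff:
  assumes "\<And>l. l < dims N (i - 1) \<Longrightarrow> aform n (\<lambda>y. x y l)"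
  shows "aform n (\<lambda>y. aff_layer N i (x y) j)"
proof (cases "j < dims N i")
  case True
  have "aform n (\<lambda>y. (\<Sum>l<dims N (i - 1). wt N i j l * x y l) + bs N i j)"
    by (intro aform_add aform_sum aform_cmul aform_const assms) auto
  then show ?thesis using True by (simp add: aff_layer_def)
next
  case False
  then show ?thesis by (simp add: aff_layer_def aform_const)
qed

lemma aform_lino: "aform (dims N (a - 1)) (\<lambda>y. lino N a \<mu> e y j)"
proof (induction e arbitrary: j)
  case 0
  show ?case by (simp, rule aform_aff, rule aform_coord) simp
next
  case (Suc e)
  show ?case
    unfolding lino.simps by (rule aform_aff, rule aform_if, rule Suc.IH, rule aform_const)
qed

lemma aform_affine:
  assumes "aform n f" "finite T" "sum c T = 1"
  shows "f (affine_comb c T) = (\<Sum>t\<in>T. c t * f t)"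
proof -
  obtain cc b where f: "\<And>y. f y = (\<Sum>l<n. cc l * y l) + b" using assms(1) by (auto simp: aform_def)
  have "f (affine_comb c T) = (\<Sum>l<n. cc l * (\<Sum>t\<in>T. c t * t l)) + b"
    by (simp add: f affine_comb_def)
  also have "(\<Sum>l<n. cc l * (\<Sum>t\<in>T. c t * t l)) = (\<Sum>l<n. \<Sum>t\<in>T. c t * (cc l * t l))"
    by (simp add: sum_distrib_left mult.left_commute)
  also have "\<dots> = (\<Sum>t\<in>T. \<Sum>l<n. c t * (cc l * t l))" by (rule sum.swap)
  also have "\<dots> = (\<Sum>t\<in>T. c t * (\<Sum>l<n. cc l * t l))" by (simp add: sum_distrib_left)
  also have "b = (\<Sum>t\<in>T. c t * b)" using assms(3) by (simp add: sum_distrib_right[symmetric])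
  finally have "f (affine_comb c T) = (\<Sum>t\<in>T. c t * (\<Sum>l<n. cc l * t l)) + (\<Sum>t\<in>T. c t * b)" .
  also have "\<dots> = (\<Sum>t\<in>T. c t * f t)" by (simp add: f sum.distrib[symmetric] distrib_left)
  finally show ?thesis .
qed

lemma aform_diff:
  assumes "aform n f" shows "f y - f z = f (y - z) - f 0"
proof -
  obtain cc b where f: "\<And>y. f y = (\<Sum>l<n. cc l * y l) + b" using assms(1) by (auto simp: aform_def)
  show ?thesis by (simp add: f right_diff_distrib sum_subtractf)
qed

lemma aform_lin_add:
  assumes "aform n f" shows "f (y + z) - f 0 = (f y - f 0) + (f z - f 0)"
proof -
  obtain cc b where f: "\<And>y. f y = (\<Sum>l<n. cc l * y l) + b" using assms(1) by (auto simp: aform_def)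
  show ?thesis by (simp add: f algebra_simps sum.distrib)
qed

lemma aform_lin_scale:
  assumes "aform n f" shows "f (fscale r y) - f 0 = r * (f y - f 0)"
proof -
  obtain cc b where f: "\<And>y. f y = (\<Sum>l<n. cc l * y l) + b" using assms(1) by (auto simp: aform_def)
  show ?thesis by (simp add: f algebra_simps sum_distrib_left fscale_def)
qed

lemma aform_line:
  assumes "aform n f" shows "f (\<lambda>l. y l + t * d l) = f y + t * (f d - f 0)"
proof -
  obtain cc b where f: "\<And>y. f y = (\<Sum>l<n. cc l * y l) + b" using assms(1) by (auto simp: aform_def)
  show ?thesis by (simp add: f algebra_simps sum.distrib sum_distrib_left)
qed

lemma aform_lip:
  assumes "aform n f" shows "\<exists>K\<ge>0. \<forall>y z e. (\<forall>l. \<bar>z l - y l\<bar> \<le> e) \<longrightarrow> \<bar>f z - f y\<bar> \<le> K * e"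
proof -
  obtain cc b where f: "\<And>y. f y = (\<Sum>l<n. cc l * y l) + b" using assms(1) by (auto simp: aform_def)
  have "\<bar>f z - f y\<bar> \<le> (\<Sum>l<n. \<bar>cc l\<bar>) * e" if h: "\<forall>l. \<bar>z l - y l\<bar> \<le> e" for y z e
  proof -
    have "\<bar>f z - f y\<bar> = \<bar>\<Sum>l<n. cc l * (z l - y l)\<bar>"
      by (simp add: f algebra_simps sum_subtractf)
    also have "\<dots> \<le> (\<Sum>l<n. \<bar>cc l * (z l - y l)\<bar>)" by (rule sum_abs)
    also have "\<dots> \<le> (\<Sum>l<n. \<bar>cc l\<bar> * e)"
      by (rule sum_mono) (simp add: abs_mult h mult_left_mono)
    finally show ?thesis by (simp add: sum_distrib_right)
  qed
  then show ?thesis by (intro exI[of _ "\<Sum>l<n. \<bar>cc l\<bar>"]) (auto simp: sum_nonneg)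
qed

lemma sgn_pert: fixes a x :: real assumes "\<bar>x\<bar> < \<bar>a\<bar>" shows "sgn (a + x) = sgn a"
proof (cases "a > 0")
  case True
  then have "a + x > 0" using assms abs_ge_minus_self[of x] by linarith
  then show ?thesis using True by simp
next
  case False
  then have "a < 0" using assms by (cases "a = 0") auto
  then have "a + x < 0" using assms abs_ge_self[of x] by linarith
  then show ?thesis using \<open>a < 0\<close> by simp
qed

lemma sign_stable1:
  assumes "aform n f" "f q \<noteq> 0"
  shows "\<exists>e>0. \<forall>y. (\<forall>l. \<bar>y l - q l\<bar> < e) \<longrightarrow> sgn (f y) = sgn (f q)"
proof -
  obtain K where K: "K \<ge> 0" "\<And>y z e. (\<forall>l. \<bar>z l - y l\<bar> \<le> e) \<Longrightarrow> \<bar>f z - f y\<bar> \<le> K * e"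
    using aform_lip[OF assms(1)] by blast
  define e where "e = \<bar>f q\<bar> / (K + 1)"
  have e: "e > 0" using assms(2) K(1) by (simp add: e_def)
  have "sgn (f y) = sgn (f q)" if h: "\<forall>l. \<bar>y l - q l\<bar> < e" for y
  proof -
    have "\<forall>l. \<bar>y l - q l\<bar> \<le> e" using h by (simp add: less_imp_le)
    then have "\<bar>f y - f q\<bar> \<le> K * e" by (rule K(2))
    also have "\<dots> < \<bar>f q\<bar>"
    proof -
      have "K * e < (K + 1) * e" using e by simp
      also have "\<dots> = \<bar>f q\<bar>" using K(1) by (simp add: e_def)
      finally show ?thesis .
    qed
    finally have "\<bar>f y - f q\<bar> < \<bar>f q\<bar>" .
    then show ?thesis using sgn_pert[of "f y - f q" "f q"] by simp
  qed
  then show ?thesis using e by blast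
qed

lemma sign_stable:
  assumes "finite Z" "\<And>z. z \<in> Z \<Longrightarrow> aform n (f z)" "\<And>z. z \<in> Z \<Longrightarrow> f z q \<noteq> 0"
  shows "\<exists>e>0. \<forall>y. (\<forall>l. \<bar>y l - q l\<bar> < e) \<longrightarrow> (\<forall>z\<in>Z. sgn (f z y) = sgn (f z q))"
  using assms
proof (induction Z rule: finite_induct)
  case empty
  show ?case by (rule exI[of _ 1]) simp
next
  case (insert z Z)
  obtain e1 where e1: "e1 > 0" "\<forall>y. (\<forall>l. \<bar>y l - q l\<bar> < e1) \<longrightarrow> (\<forall>z\<in>Z. sgn (f z y) = sgn (f z q))"
    using insert by auto
  obtain e2 where e2: "e2 > 0" "\<forall>y. (\<forall>l. \<bar>y l - q l\<bar> < e2) \<longrightarrow> sgn (f z y) = sgn (f z q)"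
    using sign_stable1[of n "f z" q] insert.prems by auto
  show ?case
  proof (intro exI[of _ "min e1 e2"] conjI allI impI)
    show "min e1 e2 > 0" using e1 e2 by simp
    fix y assume h: "\<forall>l. \<bar>y l - q l\<bar> < min e1 e2"
    then have h1: "\<forall>l. \<bar>y l - q l\<bar> < e1" and h2: "\<forall>l. \<bar>y l - q l\<bar> < e2" by auto
    have "\<forall>z\<in>Z. sgn (f z y) = sgn (f z q)" using e1(2) h1 by blast
    moreover have "sgn (f z y) = sgn (f z q)" using e2(2) h2 by blast
    ultimately show "\<forall>z'\<in>insert z Z. sgn (f z' y) = sgn (f z' q)" by blast
  qed
qed

lemma line_stable:
  assumes "finite Z" "\<And>z. z \<in> Z \<Longrightarrow> (a z :: real) \<noteq> 0"
  shows "\<exists>t>0. \<forall>z\<in>Z. sgn (a z + t * b z) = sgn (a z)"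
  using assms
proof (induction Z rule: finite_induct)
  case empty
  show ?case by (rule exI[of _ 1]) simp
next
  case (insert z Z)
  obtain t1 where t1: "t1 > 0" "\<forall>z\<in>Z. sgn (a z + t1 * b z) = sgn (a z)"
    using insert by auto
  define t2 where "t2 = \<bar>a z\<bar> / (\<bar>b z\<bar> + 1)"
  have t2: "t2 > 0" using insert.prems by (simp add: t2_def)
  define t where "t = min t1 t2 / 2"
  have t: "t > 0" "t < t1" "t < t2" using t1 t2 by (auto simp: t_def)
  have "sgn (a z' + t * b z') = sgn (a z')" if "z' \<in> insert z Z" for z'
  proof (cases "z' = z")
    case True
    have "\<bar>t * b z\<bar> \<le> t2 * \<bar>b z\<bar>" using t by (simp add: abs_mult mult_right_mono)
    also have "\<dots> < \<bar>a z\<bar>"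
    proof -
      have "t2 * \<bar>b z\<bar> < t2 * (\<bar>b z\<bar> + 1)" using t2 by simp
      also have "\<dots> = \<bar>a z\<bar>" by (simp add: t2_def)
      finally show ?thesis .
    qed
    finally show ?thesis using True sgn_pert[of "t * b z" "a z"] by simp
  next
    case False
    then have z': "z' \<in> Z" using that by auto
    have az: "a z' \<noteq> 0" using insert.prems z' by auto
    have s1: "sgn (a z' + t1 * b z') = sgn (a z')" using t1 z' by auto
    have lo: "t * b z' \<ge> min 0 (t1 * b z')" and hi: "t * b z' \<le> max 0 (t1 * b z')"
    proof -
      show "t * b z' \<ge> min 0 (t1 * b z')"
      proof (cases "b z' \<ge> 0")
        case True then show ?thesis using t by (simp add: min_def)
      next
        case False
        then have "t1 * b z' \<le> t * b z'" using t by (intro mult_right_mono_neg) auto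
        then show ?thesis by simp
      qed
      show "t * b z' \<le> max 0 (t1 * b z')"
      proof (cases "b z' \<ge> 0")
        case True
        then have "t * b z' \<le> t1 * b z'" using t by (intro mult_right_mono) auto
        then show ?thesis by simp
      next
        case False
        then have "t * b z' \<le> 0" using t by (simp add: mult_nonneg_nonpos)
        then show ?thesis by simp
      qed
    qed
    show ?thesis
    proof (cases "a z' > 0")
      case True
      then have "a z' + t1 * b z' > 0" using s1 by (auto simp: sgn_if split: if_splits)
      then have "a z' + t * b z' > 0" using lo True by linarith
      then show ?thesis using True by simp
    next
      case False
      then have "a z' < 0" using az by simp
      then have "a z' + t1 * b z' < 0" using s1 by (auto simp: sgn_if split: if_splits)
      then have "a z' + t * b z' < 0" using hi \<open>a z' < 0\<close> by linarith
      then show ?thesis using \<open>a z' < 0\<close> by simp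
    qed
  qed
  then show ?case using t by blast
qed

lemma sum_vect_apply: "(sum g A :: vect) l = (\<Sum>x\<in>A. g x l)"
  by (induction A rule: infinite_finite_induct) auto

definition ev :: "nat \<Rightarrow> vect" where "ev l = (\<lambda>i. if i = l then 1 else 0)"

lemma fscale_apply: "fscale c x l = c * x l" by (simp add: fscale_def)

lemma Rn_subspace: "fv.subspace (Rn n)"
  unfolding fv.subspace_def Rn_def by (auto simp: fscale_apply)

lemma ev_inj: "inj ev"
proof (rule injI)
  fix l m assume "ev l = ev m"
  then have "ev l l = ev m l" by simp
  then show "l = m" by (simp add: ev_def split: if_splits)
qed

lemma Rn_in_span_E: "Rn n \<subseteq> fv.span (ev ` {..<n})"
proof
  fix y assume y: "y \<in> Rn n"
  have "y = (\<Sum>l<n. fscale (y l) (ev l))"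
  proof
    fix i
    have "(\<Sum>l<n. fscale (y l) (ev l)) i = (\<Sum>l<n. if l = i then y l else 0)"
      by (simp add: sum_vect_apply ev_def fscale_apply if_distrib cong: if_cong)
    also have "\<dots> = y i" using y by (auto simp: Rn_def)
    finally show "y i = (\<Sum>l<n. fscale (y l) (ev l)) i" by simp
  qed
  also have "\<dots> \<in> fv.span (ev ` {..<n})"
    by (intro fv.span_sum fv.span_scale fv.span_base) auto
  finally show "y \<in> fv.span (ev ` {..<n})" .
qed

lemma E_in_Rn: "ev ` {..<n} \<subseteq> Rn n"
  by (auto simp: Rn_def ev_def)

lemma span_E: "fv.span (ev ` {..<n}) = Rn n"
proof
  show "fv.span (ev ` {..<n}) \<subseteq> Rn n"
    by (rule fv.span_minimal[OF E_in_Rn Rn_subspace])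
  show "Rn n \<subseteq> fv.span (ev ` {..<n})" by (rule Rn_in_span_E)
qed

lemma span_Rn: "fv.span (Rn n) = Rn n"
  using Rn_subspace by simp

lemma indep_E: "fv.independent (ev ` {..<n})"
proof (rule fv.independent_if_scalars_zero)
  show "finite (ev ` {..<n})" by simp
  fix f x assume s: "(\<Sum>x\<in>ev ` {..<n}. fscale (f x) x) = 0" and x: "x \<in> ev ` {..<n}"
  then obtain l where l: "l < n" "x = ev l" by auto
  have "0 = (\<Sum>x\<in>ev ` {..<n}. fscale (f x) x) l" using s by simp
  also have "\<dots> = (\<Sum>m<n. f (ev m) * ev m l)"
    by (simp add: sum_vect_apply fscale_apply sum.reindex[OF inj_on_subset[OF ev_inj]])
  also have "\<dots> = (\<Sum>m<n. if m = l then f (ev m) else 0)"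
    by (rule sum.cong) (auto simp: ev_def)
  also have "\<dots> = f (ev l)" using l by simp
  finally show "f x = 0" using l by simp
qed

lemma dim_Rn: "fdim (Rn n) = n"
proof -
  have "card (ev ` {..<n}) = fdim (Rn n)"
    by (rule fv.basis_card_eq_dim[OF E_in_Rn Rn_in_span_E indep_E])
  moreover have "card (ev ` {..<n}) = n"
    by (simp add: card_image inj_on_subset[OF ev_inj])
  ultimately show ?thesis by simp
qed

lemma indep_fin:
  assumes "B \<subseteq> fv.span (Rn n)" "fv.independent B"
  shows "finite B \<and> card B \<le> n"
proof -
  have "B \<subseteq> fv.span (ev ` {..<n})" using assms(1) span_E span_Rn by simp
  then have "finite B \<and> card B \<le> card (ev ` {..<n})"
    by (intro fv.independent_span_bound assms(2)) auto
  then show ?thesis by (simp add: card_image inj_on_subset[OF ev_inj])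
qed

lemma fin_basis:
  assumes "S \<subseteq> fv.span (Rn n)"
  obtains B where "B \<subseteq> S" "fv.independent B" "S \<subseteq> fv.span B" "card B = fdim S" "finite B" "card B \<le> n"
proof -
  obtain B where B: "B \<subseteq> S" "fv.independent B" "S \<subseteq> fv.span B" "card B = fdim S"
    by (rule fv.basis_exists)
  moreover have "finite B \<and> card B \<le> n" using B assms by (intro indep_fin) auto
  ultimately show ?thesis using that by blast
qed

lemma dim_mono:
  assumes "S \<subseteq> fv.span T" "T \<subseteq> fv.span (Rn n)"
  shows "fdim S \<le> fdim T"
proof -
  obtain B where B: "B \<subseteq> T" "fv.independent B" "T \<subseteq> fv.span B" "card B = fdim T" "finite B" "card B \<le> n"
    by (rule fin_basis[OF assms(2)])
  have "fv.span T \<subseteq> fv.span B" by (rule fv.span_minimal[OF B(3)]) simp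
  then have "S \<subseteq> fv.span B" using assms(1) by blast
  then have "fdim S \<le> card B" by (rule fv.dim_le_card[OF _ B(5)])
  then show ?thesis using B(4) by simp
qed

lemma dim_le_n: "S \<subseteq> fv.span (Rn n) \<Longrightarrow> fdim S \<le> n"
  using dim_mono[of S "Rn n" n] dim_Rn[of n] by (simp add: span_Rn)

lemma dim_ker1:
  assumes V: "fv.subspace V" "V \<subseteq> Rn n"
    and L: "\<And>x y. L (x + y) = L x + L y" "\<And>c x. L (fscale c x) = c * L x"
  shows "fdim V \<le> fdim {v\<in>V. L v = 0} + 1"
proof (cases "\<forall>v\<in>V. L v = 0")
  case True
  then have "{v\<in>V. L v = 0} = V" by auto
  then show ?thesis by simp
next
  case False
  then obtain b where b: "b \<in> V" "L b \<noteq> 0" by auto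
  define K where "K = {v\<in>V. L v = 0}"
  have "K \<subseteq> fv.span (Rn n)" using V(2) fv.span_superset[of "Rn n"] by (auto simp: K_def)
  then obtain B where B: "B \<subseteq> K" "fv.independent B" "K \<subseteq> fv.span B" "card B = fdim K" "finite B" "card B \<le> n"
    by (rule fin_basis)
  have Lm: "L (x - y) = L x - L y" for x y
    using L(1)[of "x - y" y] by simp
  have "V \<subseteq> fv.span (insert b B)"
  proof
    fix v assume v: "v \<in> V"
    define w where "w = v - fscale (L v / L b) b"
    have "w \<in> V" unfolding w_def using V(1) v b(1) by (intro fv.subspace_diff fv.subspace_scale) auto
    moreover have "L w = 0" unfolding w_def using b(2) by (simp add: Lm L(2))
    ultimately have "w \<in> K" by (simp add: K_def)
    then have "w \<in> fv.span (insert b B)" using B(3) fv.span_mono[of B "insert b B"] by auto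
    moreover have "fscale (L v / L b) b \<in> fv.span (insert b B)"
      by (intro fv.span_scale fv.span_base) simp
    ultimately have "w + fscale (L v / L b) b \<in> fv.span (insert b B)" by (rule fv.span_add)
    then show "v \<in> fv.span (insert b B)" by (simp add: w_def)
  qed
  then have "fdim V \<le> card (insert b B)" by (rule fv.dim_le_card) (simp add: B(5))
  also have "\<dots> \<le> card B + 1" by (simp add: B(5) card_insert_if)
  finally show ?thesis using B(4) by (simp add: K_def)
qed

lemma dim_transv:
  assumes V: "V \<subseteq> Rn n'" and W: "W \<subseteq> Rn n" and hom: "module_hom fscale fscale M"
    and sp: "Rn n \<subseteq> fv.span (M ` V \<union> W)"
  shows "fdim {d\<in>V. M d \<in> fv.span W} + n \<le> fdim V + fdim W"
proof -
  define U where "U = {d\<in>V. M d \<in> fv.span W}"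
  have Vs: "V \<subseteq> fv.span (Rn n')" using V fv.span_superset[of "Rn n'"] by auto
  have "U \<subseteq> fv.span (Rn n')" using Vs by (auto simp: U_def)
  then obtain BU where BU: "BU \<subseteq> U" "fv.independent BU" "U \<subseteq> fv.span BU" "card BU = fdim U" "finite BU" "card BU \<le> n'"
    by (rule fin_basis)
  obtain BV where BV: "BU \<subseteq> BV" "BV \<subseteq> V" "fv.independent BV" "V \<subseteq> fv.span BV"
    using fv.maximal_independent_subset_extend[of BU V] BU(1,2) by (auto simp: U_def)
  have BVf: "finite BV" using indep_fin[of BV n'] BV Vs by auto
  have cBV: "card BV = fdim V" using fv.basis_card_eq_dim[OF BV(2) BV(4) BV(3)] .
  have Ws: "W \<subseteq> fv.span (Rn n)" using W fv.span_superset[of "Rn n"] by auto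
  then obtain BW where BW: "BW \<subseteq> W" "fv.independent BW" "W \<subseteq> fv.span BW" "card BW = fdim W" "finite BW" "card BW \<le> n"
    by (rule fin_basis)
  define E where "E = BV - BU"
  have sBW: "fv.span W \<subseteq> fv.span BW" by (rule fv.span_minimal[OF BW(3)]) simp
  have "M ` BV \<subseteq> fv.span (M ` E \<union> BW)"
  proof
    fix x assume "x \<in> M ` BV"
    then obtain b where b: "b \<in> BV" "x = M b" by auto
    show "x \<in> fv.span (M ` E \<union> BW)"
    proof (cases "b \<in> BU")
      case True
      then have "M b \<in> fv.span W" using BU(1) by (auto simp: U_def)
      then have "M b \<in> fv.span BW" using sBW by auto
      then show ?thesis using b fv.span_mono[of BW "M ` E \<union> BW"] by auto
    next
      case False
      then have "M b \<in> M ` E" using b by (auto simp: E_def)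
      then have "M b \<in> M ` E \<union> BW" by blast
      then show ?thesis using b(2) fv.span_base by metis
    qed
  qed
  then have "fv.span (M ` BV) \<subseteq> fv.span (M ` E \<union> BW)" by (rule fv.span_minimal) simp
  moreover have "M ` V \<subseteq> fv.span (M ` BV)" by (rule module_hom.spans_image[OF hom BV(4)])
  ultimately have a1: "M ` V \<subseteq> fv.span (M ` E \<union> BW)" by blast
  have a2: "W \<subseteq> fv.span (M ` E \<union> BW)" using BW(3) fv.span_mono[of BW "M ` E \<union> BW"] by auto
  have "fv.span (M ` V \<union> W) \<subseteq> fv.span (M ` E \<union> BW)"
    by (rule fv.span_minimal) (use a1 a2 in auto)
  then have "Rn n \<subseteq> fv.span (M ` E \<union> BW)" using sp by blast
  then have "fdim (Rn n) \<le> card (M ` E \<union> BW)"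
    by (rule fv.dim_le_card) (simp add: E_def BVf BW(5))
  also have "\<dots> \<le> card (M ` E) + card BW" by (rule card_Un_le)
  also have "\<dots> \<le> card E + card BW" using card_image_le[of E M] BVf by (simp add: E_def)
  also have "card E = card BV - card BU" using BV(1) BVf by (simp add: E_def card_Diff_subset finite_subset)
  finally have "n \<le> card BV - card BU + card BW" by (simp add: dim_Rn)
  moreover have "card BU \<le> card BV" using BV(1) BVf by (simp add: card_mono)
  ultimately show ?thesis using BU(4) cBV BW(4) by (simp add: U_def)
qed

definition isgn :: "real \<Rightarrow> int" where
  "isgn v = (if v > 0 then 1 else if v < 0 then -1 else 0)"

lemma isgn_ok: "sign_ok (isgn v) v"
  by (simp add: isgn_def sign_ok_def)

lemma isgn_range: "isgn v \<in> {-1, 0, 1}"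
  by (simp add: isgn_def)

lemma sign_ok_0: "sign_ok s 0"
  by (simp add: sign_ok_def)

lemma sign_ok_sgn:
  assumes "sign_ok s v" "v \<noteq> 0" "sgn w = sgn v"
  shows "sign_ok s w"
  using assms by (auto simp: sign_ok_def sgn_if zero_le_mult_iff split: if_splits)

lemma sign_ok_isgn:
  assumes "sign_ok (isgn v) w" "sign_ok s v" "s \<in> {-1,0,1}"
  shows "sign_ok s w"
  using assms by (auto simp: sign_ok_def isgn_def split: if_splits)

lemma aform_aff_layer: "aform (dims N (i - 1)) (\<lambda>y. aff_layer N i y j)"
  using aform_lino[of N i \<mu> 0 j] by simp

lemma Rn_minus: "x \<in> Rn n \<Longrightarrow> y \<in> Rn n \<Longrightarrow> x - y \<in> Rn n"
  by (simp add: Rn_def)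

lemma Rn_plus: "x \<in> Rn n \<Longrightarrow> y \<in> Rn n \<Longrightarrow> x + y \<in> Rn n"
  by (simp add: Rn_def)

lemma faff_Rn: "S \<subseteq> Rn n \<Longrightarrow> faff S \<subseteq> Rn n"
  by (auto simp: faff_def affine_comb_def Rn_def subset_eq intro!: sum.neutral)

lemma faff_sub: "S \<subseteq> faff S"
proof
  fix x assume "x \<in> S"
  then show "x \<in> faff S" unfolding faff_def
    by (intro CollectI exI[of _ "{x}"] exI[of _ "\<lambda>t. 1"]) (auto simp: affine_comb_def)
qed

lemma aform_faff:
  assumes "aform n f" "y \<in> faff S" "\<forall>z\<in>S. f z = 0"
  shows "f y = 0"
proof -
  obtain T c where T: "finite T" "T \<subseteq> S" "T \<noteq> {}" "sum c T = 1" "y = affine_comb c T"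
    using assms(2) by (auto simp: faff_def)
  have "f y = (\<Sum>t\<in>T. c t * f t)" using aform_affine[OF assms(1) T(1) T(4)] T(5) by simp
  also have "\<dots> = 0" using T(2) assms(3) by (auto intro!: sum.neutral)
  finally show ?thesis .
qed

definition Iset :: "net \<Rightarrow> nat \<Rightarrow> nat \<Rightarrow> (nat \<times> nat) set" where
  "Iset N a d = {(e, j). e \<le> d \<and> j < dims N (a + e)}"

lemma Iset_finite: "finite (Iset N a d)"
proof -
  have h: "\<And>e. e \<le> d \<Longrightarrow> dims N (a + e) \<le> Max ((\<lambda>e. dims N (a + e)) ` {..d})"
    by (intro Max_ge) auto
  have "Iset N a d \<subseteq> {..d} \<times> {..<Max ((\<lambda>e. dims N (a + e)) ` {..d})}"
    unfolding Iset_def using h less_le_trans by fastforce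
  then show ?thesis by (rule finite_subset) auto
qed

lemma Scell_LC:
  assumes "sigv \<sigma>" "z \<in> Scell N a d \<sigma>" "e \<le> Suc d"
  shows "prv N a e z = lino N a (mk \<sigma>) e z"
  by (rule LC1[OF assms(1)]) (use assms in \<open>auto simp: Scell_def\<close>)

lemma FR:
  assumes sig: "sigv \<sigma>" and q: "q \<in> Scell N a d \<sigma>"
    and zq: "\<And>e j. e \<le> d \<Longrightarrow> j < dims N (a + e) \<Longrightarrow> prv N a e q j = 0 \<Longrightarrow> (\<forall>z\<in>Scell N a d \<sigma>. prv N a e z j = 0)"
  shows "q \<in> frelint (Scell N a d \<sigma>)"
proof -
  let ?S = "Scell N a d \<sigma>"
  define F where "F = (\<lambda>(z::nat\<times>nat) y. lino N a (mk \<sigma>) (fst z) y (snd z))"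
  define NZ where "NZ = {(e, j) \<in> Iset N a d. prv N a e q j \<noteq> 0}"
  have fin: "finite NZ" by (rule finite_subset[OF _ Iset_finite[of N a d]]) (auto simp: NZ_def)
  have af: "aform (dims N (a - 1)) (F z)" for z
    unfolding F_def by (simp only: aform_lino)
  have fq: "F z q \<noteq> 0" if zN: "z \<in> NZ" for z
  proof -
    obtain e j where z: "z = (e, j)" "e \<le> d" "prv N a e q j \<noteq> 0" using zN by (cases z) (auto simp: NZ_def Iset_def)
    have "prv N a e q = lino N a (mk \<sigma>) e q" by (rule Scell_LC[OF sig q]) (use z in simp)
    then show ?thesis using z by (simp add: F_def)
  qed
  have "\<exists>\<epsilon>>0. \<forall>y. (\<forall>l. \<bar>y l - q l\<bar> < \<epsilon>) \<longrightarrow> (\<forall>z\<in>NZ. sgn (F z y) = sgn (F z q))"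
    by (rule sign_stable[OF fin]) (use af fq in auto)
  then obtain \<epsilon> where eps: "\<epsilon> > 0" "\<forall>y. (\<forall>l. \<bar>y l - q l\<bar> < \<epsilon>) \<longrightarrow> (\<forall>z\<in>NZ. sgn (F z y) = sgn (F z q))"
    by blast
  have "y \<in> ?S" if y: "y \<in> faff ?S" "\<forall>l. \<bar>y l - q l\<bar> < \<epsilon>" for y
  proof -
    have "?S \<subseteq> Rn (dims N (a - 1))" unfolding Scell_def by blast
    then have yR: "y \<in> Rn (dims N (a - 1))" using faff_Rn[of ?S] y(1) by blast
    have ok: "sign_ok (\<sigma> e j) (lino N a (mk \<sigma>) e y j)" if ej: "e \<le> d" "j < dims N (a + e)" for e j
    proof (cases "prv N a e q j = 0")
      case True
      have "\<forall>z\<in>?S. lino N a (mk \<sigma>) e z j = 0"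
      proof
        fix z assume z: "z \<in> ?S"
        have "prv N a e z j = 0" using zq[OF ej True] z by blast
        moreover have "prv N a e z = lino N a (mk \<sigma>) e z" by (rule Scell_LC[OF sig z]) (use ej in simp)
        ultimately show "lino N a (mk \<sigma>) e z j = 0" by simp
      qed
      then have "lino N a (mk \<sigma>) e y j = 0"
        by (intro aform_faff[OF aform_lino y(1)]) 
      then show ?thesis by (simp add: sign_ok_0)
    next
      case False
      then have "(e, j) \<in> NZ" using ej by (simp add: NZ_def Iset_def)
      then have "sgn (F (e, j) y) = sgn (F (e, j) q)" using eps y(2) by blast
      then have "sgn (lino N a (mk \<sigma>) e y j) = sgn (lino N a (mk \<sigma>) e q j)" by (simp add: F_def)
      moreover have "prv N a e q = lino N a (mk \<sigma>) e q" by (rule Scell_LC[OF sig q]) (use ej in simp)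
      moreover have "sign_ok (\<sigma> e j) (prv N a e q j)" using q ej unfolding Scell_def by blast
      ultimately show ?thesis using False sign_ok_sgn by metis
    qed
    have pe: "prv N a e y = lino N a (mk \<sigma>) e y" if "e \<le> d" for e
    proof (rule LC2[OF sig])
      show "\<forall>e'<e. \<forall>j<dims N (a + e'). sign_ok (\<sigma> e' j) (lino N a (mk \<sigma>) e' y j)"
      proof (intro allI impI)
        fix e' j assume "e' < e" "j < dims N (a + e')"
        then show "sign_ok (\<sigma> e' j) (lino N a (mk \<sigma>) e' y j)" using that by (intro ok) auto
      qed
    qed
    have "\<forall>e\<le>d. \<forall>j<dims N (a + e). sign_ok (\<sigma> e j) (prv N a e y j)"
      using ok pe by presburger
    then show "y \<in> ?S" using yR by (simp add: Scell_def)
  qed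
  then show ?thesis unfolding frelint_def using q eps(1) by blast
qed

definition Clo :: "net \<Rightarrow> nat \<Rightarrow> vect \<Rightarrow> vect set" where
  "Clo N a y = Scell N a (depth N + 1 - a) (\<lambda>e j. isgn (prv N a e y j))"

definition zer :: "net \<Rightarrow> nat \<Rightarrow> vect \<Rightarrow> (nat \<times> nat) set" where
  "zer N a y = {(e, j). e \<le> depth N + 1 - a \<and> j < dims N (a + e) \<and> prv N a e y j = 0}"

lemma sigv_isgn: "sigv (\<lambda>e j. isgn (f e j))"
  by (simp add: sigv_def isgn_def)

lemma Clo_self: "y \<in> Rn (dims N (a - 1)) \<Longrightarrow> y \<in> Clo N a y"
  by (simp add: Clo_def Scell_def isgn_ok)

lemma Clo_frelint: "y \<in> Rn (dims N (a - 1)) \<Longrightarrow> y \<in> frelint (Clo N a y)"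
  unfolding Clo_def
  by (rule FR[OF sigv_isgn]) (auto simp: Scell_def isgn_ok sign_ok_def isgn_def)

definition VR :: "net \<Rightarrow> nat \<Rightarrow> nat set \<Rightarrow> vect set" where
  "VR N i Z = {d \<in> Rn (dims N (i - 1)). \<forall>j\<in>Z. aff_layer N i d j - aff_layer N i 0 j = 0}"

lemma GEN:
  assumes gen: "generic N" and i: "1 \<le> i" "i \<le> depth N + 1" and y: "y \<in> Rn (dims N (i - 1))"
  defines "Z \<equiv> {j. j < dims N i \<and> aff_layer N i y j = 0}"
  shows "card Z \<le> dims N (i - 1) \<and> fdim (VR N i Z) = dims N (i - 1) - card Z"
proof -
  define K where "K = {z \<in> Rn (dims N (i - 1)). \<forall>j\<in>Z. aff_layer N i z j = 0}"
  have G: "(card Z \<le> dims N (i - 1) \<longrightarrow> K \<noteq> {} \<and> affdim K = dims N (i - 1) - card Z) \<and>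
       (dims N (i - 1) < card Z \<longrightarrow> K = {})"
    using gen i unfolding generic_def K_def Let_def
    by (metis (no_types, lifting) Z_def atLeastAtMost_iff lessThan_iff mem_Collect_eq subsetI)
  have yK: "y \<in> K" using y by (simp add: K_def Z_def)
  then have c: "card Z \<le> dims N (i - 1)" using G by auto
  define p where "p = (SOME x. x \<in> K)"
  have p: "p \<in> K" unfolding p_def by (rule someI[of "\<lambda>x. x \<in> K" y, OF yK])
  have af: "aform (dims N (i - 1)) (\<lambda>y. aff_layer N i y j)" for j by (rule aform_aff_layer)
  have "(\<lambda>z. z - p) ` K = VR N i Z"
  proof
    show "(\<lambda>z. z - p) ` K \<subseteq> VR N i Z"
    proof clarify
      fix z assume z: "z \<in> K"
      have eq: "aff_layer N i (z - p) j - aff_layer N i 0 j = aff_layer N i z j - aff_layer N i p j" for j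
        using aform_diff[OF af, where y=z and z=p] by simp
      have "aff_layer N i (z - p) j - aff_layer N i 0 j = 0" if "j \<in> Z" for j
        using eq[of j] z p that by (simp add: K_def)
      then show "z - p \<in> VR N i Z" using z p by (auto simp: VR_def K_def Rn_minus)
    qed
    show "VR N i Z \<subseteq> (\<lambda>z. z - p) ` K"
    proof
      fix d assume d: "d \<in> VR N i Z"
      have eq: "aff_layer N i (d + p) j - aff_layer N i p j = aff_layer N i d j - aff_layer N i 0 j" for j
        using aform_diff[OF af, where y="d + p" and z=p] by simp
      have "aff_layer N i (d + p) j = 0" if "j \<in> Z" for j
        using eq[of j] d p that by (simp add: VR_def K_def)
      then have "d + p \<in> K" using d p by (auto simp: VR_def K_def Rn_plus)
      then show "d \<in> (\<lambda>z. z - p) ` K" by (intro image_eqI[of _ _ "d + p"]) auto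
    qed
  qed
  then have "affdim K = fdim (VR N i Z)" by (simp add: affdim_def p_def)
  then show ?thesis using G c by auto
qed

lemma all_le_Suc: "(\<forall>e\<le>Suc m. P e) \<longleftrightarrow> P 0 \<and> (\<forall>e\<le>m. P (Suc e))"
proof
  assume "\<forall>e\<le>Suc m. P e" then show "P 0 \<and> (\<forall>e\<le>m. P (Suc e))" by auto
next
  assume h: "P 0 \<and> (\<forall>e\<le>m. P (Suc e))"
  show "\<forall>e\<le>Suc m. P e"
  proof (intro allI impI)
    fix e assume "e \<le> Suc m" then show "P e" using h by (cases e) auto
  qed
qed

lemma layer_eq: "a \<le> depth N \<Longrightarrow> layer N a = (\<lambda>z. relu_v (aff_layer N a z))"
  by (auto simp: layer_def)

lemma Clo_step:
  assumes "1 \<le> a" "a \<le> depth N"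
  shows "Clo N a y = {z \<in> Scell N a 0 (\<lambda>e j. isgn (prv N a e y j)).
            relu_v (aff_layer N a z) \<in> Clo N (Suc a) (relu_v (aff_layer N a y))}"
proof -
  obtain m where m: "depth N + 1 - a = Suc m" "depth N + 1 - Suc a = m"
    using assms by (intro that[of "depth N - a"]) auto
  show ?thesis
    unfolding Clo_def Scell_def m all_le_Suc prv_shift
    by (auto simp: aff_Rn relu_Rn)
qed

lemma zer_step:
  assumes "1 \<le> a" "a \<le> depth N"
  shows "zer N a y = (\<lambda>j. (0, j)) ` {j. j < dims N a \<and> aff_layer N a y j = 0}
     \<union> (\<lambda>(e, j). (Suc e, j)) ` zer N (Suc a) (relu_v (aff_layer N a y))"
proof -
  obtain m where m: "depth N + 1 - a = Suc m" "depth N + 1 - Suc a = m"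
    using assms by (intro that[of "depth N - a"]) auto
  show ?thesis
  proof (rule set_eqI)
    fix p :: "nat \<times> nat"
    obtain e j where p: "p = (e, j)" by (cases p)
    show "p \<in> zer N a y \<longleftrightarrow> p \<in> (\<lambda>j. (0, j)) ` {j. j < dims N a \<and> aff_layer N a y j = 0}
     \<union> (\<lambda>(e, j). (Suc e, j)) ` zer N (Suc a) (relu_v (aff_layer N a y))"
    proof (cases e)
      case 0 then show ?thesis by (auto simp: p zer_def)
    next
      case (Suc e')
      then show ?thesis using m unfolding p zer_def Suc by (auto simp: image_iff prv_shift simp del: prv.simps)
    qed
  qed
qed

lemma zer_finite: "finite (zer N a y)"
  by (rule finite_subset[OF _ Iset_finite[of N a "depth N + 1 - a"]]) (auto simp: zer_def Iset_def)

lemma zer_card_step: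
  assumes "1 \<le> a" "a \<le> depth N"
  shows "card (zer N a y) = card {j. j < dims N a \<and> aff_layer N a y j = 0} + card (zer N (Suc a) (relu_v (aff_layer N a y)))"
proof -
  let ?Z = "{j. j < dims N a \<and> aff_layer N a y j = 0}"
  let ?Y = "zer N (Suc a) (relu_v (aff_layer N a y))"
  have "card (zer N a y) = card ((\<lambda>j. (0::nat, j)) ` ?Z \<union> (\<lambda>(e, j). (Suc e, j)) ` ?Y)"
    using zer_step[OF assms] by simp
  also have "\<dots> = card ((\<lambda>j. (0::nat, j)) ` ?Z) + card ((\<lambda>(e, j). (Suc e, j)) ` ?Y)"
    by (rule card_Un_disjoint) (auto intro: zer_finite)
  also have "card ((\<lambda>j. (0::nat, j)) ` ?Z) = card ?Z" by (rule card_image) (auto simp: inj_on_def)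
  also have "card ((\<lambda>(e, j). (Suc e, j)) ` ?Y) = card ?Y" by (rule card_image) (auto simp: inj_on_def)
  finally show ?thesis .
qed

lemma Scell_Rn: "Scell N a d \<sigma> \<subseteq> Rn (dims N (a - 1))"
  unfolding Scell_def by blast

lemma Clo_nonempty_canon:
  assumes "1 \<le> a" "a \<le> depth N + 1" "y \<in> Rn (dims N (a - 1))"
  shows "Clo N a y \<in> canon N a (depth N + 1 - a)"
  unfolding Clo_def
  by (rule Scell_canon) (use assms Clo_self[OF assms(3)] in \<open>auto simp: sigv_isgn Clo_def\<close>)

lemma R_hyp:
  assumes "1 \<le> a" "a \<le> depth N + 1" "y \<in> Rn (dims N (a - 1))"
  shows "Scell N a 0 (\<lambda>e j. isgn (prv N a e y j)) \<in> hyp_cells N a"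
proof -
  have "y \<in> Scell N a 0 (\<lambda>e j. isgn (prv N a e y j))"
    using assms(3) by (simp add: Scell_def isgn_ok)
  then have "Scell N a 0 (\<lambda>e j. isgn (prv N a e y j)) \<in> canon N a 0"
    by (intro Scell_canon) (use assms in \<open>auto simp: sigv_isgn\<close>)
  then show ?thesis by simp
qed

lemma R_frelint:
  assumes "y \<in> Rn (dims N (a - 1))"
  shows "y \<in> frelint (Scell N a 0 (\<lambda>e j. isgn (prv N a e y j)))"
  by (rule FR[OF sigv_isgn]) (use assms in \<open>auto simp: Scell_def isgn_ok sign_ok_def isgn_def\<close>)

lemma KL1_step:
  assumes gen: "generic N" and st: "supertransversal N" and a: "1 \<le> a" "a \<le> depth N"
    and y: "y \<in> Rn (dims N (a - 1))"
    and y': "y' = relu_v (aff_layer N a y)"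
    and IH: "fdim {w - y' | w. w \<in> Clo N (Suc a) y'} + card (zer N (Suc a) y') \<le> dims N a"
  shows "fdim {z - y | z. z \<in> Clo N a y} + card (zer N a y) \<le> dims N (a - 1)"
proof -
  define \<sigma>0 where "\<sigma>0 = (\<lambda>e j. isgn (prv N a e y j))"
  define R where "R = Scell N a 0 \<sigma>0"
  define Z where "Z = {j. j < dims N a \<and> aff_layer N a y j = 0}"
  define n' where "n' = dims N (a - 1)"
  define n where "n = dims N a"
  define D where "D = Clo N (Suc a) y'"
  define V where "V = VR N a Z"
  have GZ: "card Z \<le> n' \<and> fdim V = n' - card Z"
    using GEN[OF gen a(1) _ y] a(2) by (simp add: Z_def n'_def V_def)
  have y'R: "y' \<in> Rn n" by (simp add: y' n_def aff_Rn relu_Rn)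
  have cloeq: "Clo N a y = {z \<in> R. relu_v (aff_layer N a z) \<in> D}"
    using Clo_step[OF a] by (simp add: R_def D_def \<sigma>0_def y')
  have zereq: "card (zer N a y) = card Z + card (zer N (Suc a) y')"
    using zer_card_step[OF a] by (simp add: Z_def y')
  have lay: "layer N a = (\<lambda>z. relu_v (aff_layer N a z))" using a(2) by (rule layer_eq)
  have Rh: "R \<in> hyp_cells N a" unfolding R_def \<sigma>0_def by (rule R_hyp) (use a y in auto)
  have Dc: "D \<in> canon N (a + 1) (depth N - a)"
    using Clo_nonempty_canon[of "Suc a" N y'] a y'R by (simp add: D_def n_def)
  have tr: "transverse_on (layer N a) R D n"
    using st a Rh Dc unfolding supertransversal_def n_def by auto
  have yfr: "y \<in> frelint R" unfolding R_def \<sigma>0_def by (rule R_frelint[OF y])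
  have y'fr: "y' \<in> frelint D" unfolding D_def by (rule Clo_frelint) (use y'R in \<open>simp add: n_def\<close>)
  have span_eq: "fv.span ({layer N a z - layer N a y | z. z \<in> frelint R} \<union> {z - w | z w. z \<in> frelint D \<and> w \<in> frelint D}) = Rn n"
    using tr yfr y'fr lay y' unfolding transverse_on_def by auto
  define M where "M = (\<lambda>d::vect. \<lambda>j. if j < n \<and> \<sigma>0 0 j = 1 then aff_layer N a d j - aff_layer N a 0 j else 0)"
  have af: "aform (dims N (a - 1)) (\<lambda>y. aff_layer N a y j)" for j by (rule aform_aff_layer)
  have hom: "module_hom fscale fscale M"
    unfolding module_hom_iff_linear Vector_Spaces.linear_iff
  proof (intro conjI allI vector_space_fscale)
    fix x y :: vect
    show "M (x + y) = M x + M y"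
      using aform_lin_add[OF af] by (auto simp: M_def)
  next
    fix c :: real and x :: vect
    show "M (fscale c x) = fscale c (M x)"
      using aform_lin_scale[OF af] by (auto simp: M_def fscale_def)
  qed
  have Rsub: "R \<subseteq> Rn n'" unfolding R_def n'_def by (rule Scell_Rn)
  have Mz: "relu_v (aff_layer N a z) - y' = M (z - y)" if z: "z \<in> R" for z
  proof
    fix j
    show "(relu_v (aff_layer N a z) - y') j = M (z - y) j"
    proof (cases "j < n")
      case False
      then show ?thesis by (simp add: M_def y' relu_v_def aff_layer_def n_def)
    next
      case True
      have so: "sign_ok (\<sigma>0 0 j) (aff_layer N a z j)" using z True by (simp add: R_def Scell_def n_def)
      have d: "aff_layer N a (z - y) j - aff_layer N a 0 j = aff_layer N a z j - aff_layer N a y j"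
        using aform_diff[OF af, where y=z and z=y] by simp
      show ?thesis using so d True
        by (auto simp: M_def y' relu_v_def \<sigma>0_def isgn_def sign_ok_def split: if_splits)
    qed
  qed
  have VRz: "z - y \<in> V" if z: "z \<in> R" for z
  proof -
    have "aff_layer N a (z - y) j - aff_layer N a 0 j = 0" if j: "j \<in> Z" for j
    proof -
      have "sign_ok (\<sigma>0 0 j) (aff_layer N a z j)" using z j by (simp add: R_def Scell_def Z_def)
      then have "aff_layer N a z j = 0" using j by (simp add: \<sigma>0_def Z_def isgn_def sign_ok_def)
      moreover have "aff_layer N a (z - y) j - aff_layer N a 0 j = aff_layer N a z j - aff_layer N a y j"
        using aform_diff[OF af, where y=z and z=y] by simp
      ultimately show ?thesis using j by (simp add: Z_def)
    qed
    moreover have "z - y \<in> Rn n'" using Rsub z y by (simp add: Rn_minus n'_def subset_eq)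
    ultimately show ?thesis by (simp add: V_def VR_def n'_def)
  qed
  define W0 where "W0 = {w - y' | w. w \<in> D}"
  have Dsub: "D \<subseteq> Rn n" unfolding D_def Clo_def n_def using Scell_Rn[of N "Suc a"] by simp
  have W0R: "W0 \<subseteq> Rn n" using Dsub y'R by (auto simp: W0_def Rn_minus)
  have VRR: "V \<subseteq> Rn n'" by (auto simp: V_def VR_def n'_def)
  have frR: "frelint R \<subseteq> R" by (auto simp: frelint_def)
  have frD: "frelint D \<subseteq> D" by (auto simp: frelint_def)
  have cover: "Rn n \<subseteq> fv.span (M ` V \<union> W0)"
  proof -
    have "{layer N a z - layer N a y | z. z \<in> frelint R} \<union> {z - w | z w. z \<in> frelint D \<and> w \<in> frelint D}
          \<subseteq> fv.span (M ` V \<union> W0)"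
    proof
      fix x assume "x \<in> {layer N a z - layer N a y | z. z \<in> frelint R} \<union> {z - w | z w. z \<in> frelint D \<and> w \<in> frelint D}"
      then show "x \<in> fv.span (M ` V \<union> W0)"
      proof
        assume "x \<in> {layer N a z - layer N a y | z. z \<in> frelint R}"
        then obtain z where z: "z \<in> R" "x = layer N a z - layer N a y" using frR by auto
        then have "x = M (z - y)" using Mz lay y' by simp
        moreover have "z - y \<in> V" using VRz z by simp
        ultimately show ?thesis by (intro fv.span_base) auto
      next
        assume "x \<in> {z - w | z w. z \<in> frelint D \<and> w \<in> frelint D}"
        then obtain z w where zw: "z \<in> D" "w \<in> D" "x = z - w" using frD by auto
        have "z - y' \<in> W0" "w - y' \<in> W0" using zw by (auto simp: W0_def)
        then have "(z - y') - (w - y') \<in> fv.span (M ` V \<union> W0)"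
          by (intro fv.span_diff fv.span_base) auto
        then show ?thesis using zw by simp
      qed
    qed
    then have "fv.span ({layer N a z - layer N a y | z. z \<in> frelint R} \<union> {z - w | z w. z \<in> frelint D \<and> w \<in> frelint D})
          \<subseteq> fv.span (M ` V \<union> W0)" by (rule fv.span_minimal) simp
    then show ?thesis using span_eq by simp
  qed
  have D4: "fdim {d\<in>V. M d \<in> fv.span W0} + n \<le> fdim V + fdim W0"
    by (rule dim_transv[OF VRR W0R hom cover])
  have sub: "{z - y | z. z \<in> Clo N a y} \<subseteq> {d\<in>V. M d \<in> fv.span W0}"
  proof clarify
    fix z assume "z \<in> Clo N a y"
    then have z: "z \<in> R" "relu_v (aff_layer N a z) \<in> D" using cloeq by auto
    have "M (z - y) = relu_v (aff_layer N a z) - y'" using Mz[OF z(1)] by simp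
    then have "M (z - y) \<in> W0" unfolding W0_def using z(2) by blast
    then show "z - y \<in> V \<and> M (z - y) \<in> fv.span W0" using VRz[OF z(1)] fv.span_base by auto
  qed
  have "fdim {z - y | z. z \<in> Clo N a y} \<le> fdim {d\<in>V. M d \<in> fv.span W0}"
  proof (rule dim_mono)
    show "{z - y | z. z \<in> Clo N a y} \<subseteq> fv.span {d\<in>V. M d \<in> fv.span W0}"
      using sub fv.span_superset by blast
    show "{d\<in>V. M d \<in> fv.span W0} \<subseteq> fv.span (Rn n')" using VRR fv.span_superset by blast
  qed
  moreover have "fdim W0 + card (zer N (Suc a) y') \<le> n" using IH by (simp add: W0_def D_def n_def)
  ultimately show ?thesis using D4 GZ zereq unfolding n'_def by linarith
qed

lemma KL1:
  assumes gen: "generic N" and st: "supertransversal N" and a: "1 \<le> a" "a \<le> depth N + 1"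
    and y: "y \<in> Rn (dims N (a - 1))"
  shows "fdim {z - y | z. z \<in> Clo N a y} + card (zer N a y) \<le> dims N (a - 1)"
  using a y
proof (induction "depth N + 1 - a" arbitrary: a y)
  case 0
  then have a: "a = depth N + 1" by simp
  define Z where "Z = {j. j < dims N a \<and> aff_layer N a y j = 0}"
  have GZ: "card Z \<le> dims N (a - 1) \<and> fdim (VR N a Z) = dims N (a - 1) - card Z"
    using GEN[OF gen 0(2) _ 0(4)] a by (simp add: Z_def)
  have zz: "zer N a y = (\<lambda>j. (0, j)) ` Z" using a by (auto simp: zer_def Z_def)
  have cz: "card (zer N a y) = card Z" unfolding zz by (rule card_image) (auto simp: inj_on_def)
  have af: "aform (dims N (a - 1)) (\<lambda>y. aff_layer N a y j)" for j by (rule aform_aff_layer)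
  have sub: "{z - y | z. z \<in> Clo N a y} \<subseteq> VR N a Z"
  proof clarify
    fix z assume z: "z \<in> Clo N a y"
    have zR: "z \<in> Rn (dims N (a - 1))" using subsetD[OF Scell_Rn] z unfolding Clo_def by blast
    have "aff_layer N a (z - y) j - aff_layer N a 0 j = 0" if j: "j \<in> Z" for j
    proof -
      have zz: "\<forall>e\<le>depth N + 1 - a. \<forall>j<dims N (a + e). sign_ok (isgn (prv N a e y j)) (prv N a e z j)"
        using z unfolding Clo_def Scell_def by blast
      have "j < dims N (a + 0)" using j by (simp add: Z_def)
      then have "sign_ok (isgn (prv N a 0 y j)) (prv N a 0 z j)" using zz by blast
      then have "aff_layer N a z j = 0" using j by (simp add: Z_def isgn_def sign_ok_def)
      moreover have "aff_layer N a (z - y) j - aff_layer N a 0 j = aff_layer N a z j - aff_layer N a y j"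
        using aform_diff[OF af, where y=z and z=y] by simp
      ultimately show ?thesis using j by (simp add: Z_def)
    qed
    then show "z - y \<in> VR N a Z" using zR 0(4) by (simp add: VR_def Rn_minus)
  qed
  have "fdim {z - y | z. z \<in> Clo N a y} \<le> fdim (VR N a Z)"
  proof (rule dim_mono)
    show "{z - y | z. z \<in> Clo N a y} \<subseteq> fv.span (VR N a Z)" using sub fv.span_superset by blast
    show "VR N a Z \<subseteq> fv.span (Rn (dims N (a - 1)))" using fv.span_superset by (auto simp: VR_def)
  qed
  then show ?case using GZ cz by linarith
next
  case (Suc m)
  have a: "a \<le> depth N" using Suc by simp
  define y' where "y' = relu_v (aff_layer N a y)"
  have y'R: "y' \<in> Rn (dims N (Suc a - 1))" by (simp add: y'_def aff_Rn relu_Rn)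
  have IH: "fdim {w - y' | w. w \<in> Clo N (Suc a) y'} + card (zer N (Suc a) y') \<le> dims N (Suc a - 1)"
    by (rule Suc.hyps(1)) (use Suc a y'R in auto)
  show ?case
    by (rule KL1_step[OF gen st Suc(3) a Suc(5) y'_def]) (use IH in simp)
qed

lemma KL1_count:
  assumes gen: "generic N" and st: "supertransversal N" and y: "y \<in> Rn (dims N 0)"
  shows "card (zer N 1 y) \<le> dims N 0"
  using KL1[OF gen st _ _ , of 1 y] y by simp

lemma cont_aff:
  assumes "\<And>l. continuous_on UNIV (\<lambda>y. x y l)"
  shows "continuous_on UNIV (\<lambda>y. aff_layer N i (x y) j)"
proof (cases "j < dims N i")
  case True
  have eq: "(\<lambda>y. aff_layer N i (x y) j) = (\<lambda>y. (\<Sum>l<dims N (i - 1). wt N i j l * x y l) + bs N i j)"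
    using True by (simp add: aff_layer_def fun_eq_iff)
  show ?thesis unfolding eq by (intro continuous_intros assms)
next
  case False
  then have eq: "(\<lambda>y. aff_layer N i (x y) j) = (\<lambda>y. 0)" by (simp add: aff_layer_def fun_eq_iff)
  show ?thesis unfolding eq by (rule continuous_on_const)
qed

lemma cont_prv: "continuous_on UNIV (\<lambda>y. prv N a e y j)"
proof (induction e arbitrary: j)
  case 0
  show ?case unfolding prv.simps by (rule cont_aff) simp
next
  case (Suc e)
  have "continuous_on UNIV (\<lambda>y. relu_v (prv N a e y) l)" for l
    unfolding relu_v_def by (intro continuous_intros Suc.IH)
  then show ?case unfolding prv.simps by (rule cont_aff)
qed

lemma closed_sign_ok:
  assumes "continuous_on UNIV f"
  shows "closed {y. sign_ok s (f y)}"
proof (cases "s = 0")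
  case True
  then show ?thesis using closed_Collect_eq[OF assms continuous_on_const] by (simp add: sign_ok_def)
next
  case False
  have "continuous_on UNIV (\<lambda>y. real_of_int s * f y)" by (intro continuous_intros assms)
  then have "closed {y. 0 \<le> real_of_int s * f y}" by (intro closed_Collect_le continuous_on_const)
  then show ?thesis using False by (simp add: sign_ok_def)
qed

lemma closed_Rn: "closed (Rn n)"
proof -
  have "Rn n = {y. \<forall>l. n \<le> l \<longrightarrow> y l = 0}" by (auto simp: Rn_def)
  moreover have "closed {y. \<forall>l. n \<le> l \<longrightarrow> (y::vect) l = 0}"
  proof (intro closed_Collect_all)
    fix l
    show "closed {y. n \<le> l \<longrightarrow> (y::vect) l = 0}"
    proof (cases "n \<le> l")
      case True
      then show ?thesis using closed_Collect_eq[OF continuous_on_product_coordinates continuous_on_const, of l 0] by simp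
    next
      case False then show ?thesis by simp
    qed
  qed
  ultimately show ?thesis by simp
qed

lemma closed_Scell: "closed (Scell N a d \<sigma>)"
proof -
  have "Scell N a d \<sigma> = Rn (dims N (a - 1)) \<inter> {y. \<forall>e. e \<le> d \<longrightarrow> (\<forall>j. j < dims N (a + e) \<longrightarrow> sign_ok (\<sigma> e j) (prv N a e y j))}"
    by (auto simp: Scell_def)
  moreover have "closed {y. \<forall>e. e \<le> d \<longrightarrow> (\<forall>j. j < dims N (a + e) \<longrightarrow> sign_ok (\<sigma> e j) (prv N a e y j))}"
  proof (intro closed_Collect_all)
    fix e
    show "closed {y. e \<le> d \<longrightarrow> (\<forall>j. j < dims N (a + e) \<longrightarrow> sign_ok (\<sigma> e j) (prv N a e y j))}"
    proof (cases "e \<le> d")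
      case False then show ?thesis by simp
    next
      case True
      have "closed {y. \<forall>j. j < dims N (a + e) \<longrightarrow> sign_ok (\<sigma> e j) (prv N a e y j)}"
      proof (intro closed_Collect_all)
        fix j
        show "closed {y. j < dims N (a + e) \<longrightarrow> sign_ok (\<sigma> e j) (prv N a e y j)}"
          by (cases "j < dims N (a + e)") (simp_all add: closed_sign_ok cont_prv)
      qed
      then show ?thesis using True by simp
    qed
  qed
  ultimately show ?thesis using closed_Rn by auto
qed

lemma sign_ok_conv:
  assumes "s \<in> {-1, 0, 1}" "sign_ok s p" "sign_ok s q" "0 < t" "t < 1" "(1 - t) * p + t * q = 0"
  shows "p = 0 \<and> q = 0"
proof -
  have "0 < 1 - t" using assms by simp
  show ?thesis
  proof (cases "s = 0")
    case True then show ?thesis using assms by (simp add: sign_ok_def)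
  next
    case False
    then have s: "s = 1 \<or> s = -1" using assms(1) by auto
    then show ?thesis
    proof
      assume "s = 1"
      then have "p \<ge> 0" "q \<ge> 0" using assms by (auto simp: sign_ok_def)
      moreover have "(1 - t) * p \<ge> 0" "t * q \<ge> 0" using calculation \<open>0 < 1 - t\<close> assms(4) by simp_all
      ultimately show ?thesis using assms(6) \<open>0 < 1 - t\<close> assms(4)
        by (metis add_nonneg_eq_0_iff mult_eq_0_iff order_less_irrefl)
    next
      assume "s = -1"
      then have "p \<le> 0" "q \<le> 0" using assms by (auto simp: sign_ok_def)
      moreover have "(1 - t) * p \<le> 0" "t * q \<le> 0" using calculation \<open>0 < 1 - t\<close> assms(4)
        by (simp_all add: mult_nonneg_nonpos)
      ultimately show ?thesis using assms(6) \<open>0 < 1 - t\<close> assms(4)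
        by (metis add_nonpos_eq_0_iff mult_eq_0_iff order_less_irrefl)
    qed
  qed
qed

lemma sign_ok_scale: "sign_ok s p \<Longrightarrow> c \<ge> 0 \<Longrightarrow> sign_ok s (p * c)"
  by (auto simp: sign_ok_def mult.assoc[symmetric] zero_le_mult_iff)

lemma sign_ok_same_sgn:
  assumes "s \<in> {-1, 0, 1}" "sign_ok s v" "sign_ok s w" "v \<noteq> 0" "w \<noteq> 0"
  shows "sgn v = sgn w"
  using assms by (auto simp: sign_ok_def zero_le_mult_iff sgn_if)

lemma sign_ok_sum:
  assumes "finite T" "\<And>t. t \<in> T \<Longrightarrow> sign_ok s (v t)" "\<And>t. t \<in> T \<Longrightarrow> c t \<ge> 0"
  shows "sign_ok s (\<Sum>t\<in>T. c t * v t)"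
proof (cases "s = 0")
  case True then show ?thesis using assms by (simp add: sign_ok_def)
next
  case False
  have "0 \<le> (\<Sum>t\<in>T. c t * (real_of_int s * v t))"
    using assms False by (intro sum_nonneg) (simp add: sign_ok_def)
  then show ?thesis using False by (simp add: sign_ok_def sum_distrib_left mult.left_commute)
qed

lemma sign_strict_sum:
  assumes "finite T" "s \<in> {-1, 1}" "\<And>t. t \<in> T \<Longrightarrow> sign_ok s (v t)" "\<And>t. t \<in> T \<Longrightarrow> c t > 0"
    "t0 \<in> T" "v t0 \<noteq> 0"
  shows "(\<Sum>t\<in>T. c t * v t) \<noteq> 0"
proof -
  have nn: "0 \<le> c t * (real_of_int s * v t)" if t: "t \<in> T" for t
  proof -
    have "0 \<le> real_of_int s * v t" using assms(2) assms(3)[OF t] by (auto simp: sign_ok_def)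
    moreover have "0 \<le> c t" using assms(4)[OF t] by simp
    ultimately show ?thesis by simp
  qed
  have "0 < c t0 * (real_of_int s * v t0)"
  proof -
    have "0 \<le> real_of_int s * v t0" using assms(2,3,5) by (auto simp: sign_ok_def)
    moreover have "real_of_int s * v t0 \<noteq> 0" using assms(2,6) by auto
    ultimately have "0 < real_of_int s * v t0" by linarith
    moreover have "0 < c t0" using assms(4,5) by simp
    ultimately show ?thesis by simp
  qed
  moreover have "c t0 * (real_of_int s * v t0) \<le> (\<Sum>t\<in>T. c t * (real_of_int s * v t))"
    by (rule member_le_sum) (use assms(5,1) nn in auto)
  ultimately have "0 < real_of_int s * (\<Sum>t\<in>T. c t * v t)"
    by (simp add: sum_distrib_left mult.left_commute)
  then show ?thesis by auto
qed

locale setting =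
  fixes N :: net and K :: nat and \<sigma> :: "nat \<Rightarrow> nat \<Rightarrow> int"
  assumes gen: "generic N" and st: "supertransversal N" and width: "dims N 0 \<le> dims N 1"
    and Kb: "K + 2 \<le> depth N + 1" and sig: "sigv \<sigma>" and Cne: "Scell N 1 K \<sigma> \<noteq> {}"
begin

abbreviation "CC \<equiv> Scell N 1 K \<sigma>"

definition Lf :: "nat \<Rightarrow> nat \<Rightarrow> vect \<Rightarrow> real" where
  "Lf e j d = lino N 1 (mk \<sigma>) e d j - lino N 1 (mk \<sigma>) e 0 j"

lemma afl: "aform (dims N 0) (\<lambda>x. lino N 1 (mk \<sigma>) e x j)"
  using aform_lino[of N 1 "mk \<sigma>" e j] by simp

lemma C_LC: "z \<in> CC \<Longrightarrow> e \<le> Suc K \<Longrightarrow> prv N 1 e z = lino N 1 (mk \<sigma>) e z"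
  by (rule Scell_LC[OF sig])

lemma CRn: "CC \<subseteq> Rn (dims N 0)"
  using Scell_Rn[of N 1 K \<sigma>] by simp

lemma LCC:
  assumes x: "x \<in> Rn (dims N 0)" and ok: "\<forall>e\<le>K. \<forall>j<dims N (1 + e). sign_ok (\<sigma> e j) (lino N 1 (mk \<sigma>) e x j)"
  shows "x \<in> CC" "\<And>e. e \<le> Suc K \<Longrightarrow> prv N 1 e x = lino N 1 (mk \<sigma>) e x"
proof -
  show pe: "prv N 1 e x = lino N 1 (mk \<sigma>) e x" if "e \<le> Suc K" for e
  proof (rule LC2[OF sig])
    show "\<forall>e'<e. \<forall>j<dims N (1 + e'). sign_ok (\<sigma> e' j) (lino N 1 (mk \<sigma>) e' x j)"
      using ok that by auto
  qed
  have "\<forall>e\<le>K. \<forall>j<dims N (1 + e). sign_ok (\<sigma> e j) (prv N 1 e x j)"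
    using ok pe by simp
  then show "x \<in> CC" using x by (simp add: Scell_def)
qed

lemma closure_C: "closure CC = CC"
  by (rule closure_closed[OF closed_Scell])

lemma SC1: "\<exists>q. q \<in> frelint CC"
proof -
  define NZC where "NZC = {z \<in> Iset N 1 K. \<exists>x\<in>CC. prv N 1 (fst z) x (snd z) \<noteq> 0}"
  have finNZC: "finite NZC" by (rule finite_subset[OF _ Iset_finite[of N 1 K]]) (auto simp: NZC_def)
  define pt where "pt z = (SOME x. x \<in> CC \<and> prv N 1 (fst z) x (snd z) \<noteq> 0)" for z
  have pt: "pt z \<in> CC \<and> prv N 1 (fst z) (pt z) (snd z) \<noteq> 0" if zN: "z \<in> NZC" for z
  proof -
    obtain x where "x \<in> CC \<and> prv N 1 (fst z) x (snd z) \<noteq> 0" using zN by (auto simp: NZC_def)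
    then show ?thesis unfolding pt_def by (rule someI[of "\<lambda>x. x \<in> CC \<and> prv N 1 (fst z) x (snd z) \<noteq> 0"])
  qed
  obtain c0 where c0: "c0 \<in> CC" using Cne by auto
  define Q where "Q = insert c0 (pt ` NZC)"
  have Qf: "finite Q" using finNZC by (simp add: Q_def)
  have QC: "Q \<subseteq> CC" using c0 pt by (auto simp: Q_def)
  have Qne: "Q \<noteq> {}" by (simp add: Q_def)
  define cf where "cf = (\<lambda>t::vect. 1 / real (card Q))"
  have cQ: "card Q > 0" using Qf Qne by (simp add: card_gt_0_iff)
  have sum1: "sum cf Q = 1" using cQ by (simp add: cf_def)
  define q where "q = affine_comb cf Q"
  have qfaff: "q \<in> faff CC" unfolding q_def faff_def using Qf QC Qne sum1 by blast
  have qR: "q \<in> Rn (dims N 0)" using faff_Rn[OF CRn] qfaff by blast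
  have lq: "lino N 1 (mk \<sigma>) e q j = (\<Sum>t\<in>Q. cf t * lino N 1 (mk \<sigma>) e t j)" for e j
    unfolding q_def by (rule aform_affine[OF afl Qf sum1])
  have okq: "\<forall>e\<le>K. \<forall>j<dims N (1 + e). sign_ok (\<sigma> e j) (lino N 1 (mk \<sigma>) e q j)"
  proof (intro allI impI)
    fix e j assume ej: "e \<le> K" "j < dims N (1 + e)"
    have "sign_ok (\<sigma> e j) (\<Sum>t\<in>Q. cf t * lino N 1 (mk \<sigma>) e t j)"
    proof (rule sign_ok_sum[OF Qf])
      fix t assume t: "t \<in> Q"
      then have "t \<in> CC" using QC by auto
      then show "sign_ok (\<sigma> e j) (lino N 1 (mk \<sigma>) e t j)"
        using C_LC[of t e] ej by (auto simp: Scell_def)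
      show "cf t \<ge> 0" by (simp add: cf_def)
    qed
    then show "sign_ok (\<sigma> e j) (lino N 1 (mk \<sigma>) e q j)" by (simp only: lq)
  qed
  have qC: "q \<in> CC" by (rule LCC(1)[OF qR okq])
  have qpe: "prv N 1 e q = lino N 1 (mk \<sigma>) e q" if "e \<le> Suc K" for e by (rule LCC(2)[OF qR okq that])
  have "q \<in> frelint CC"
  proof (rule FR[OF sig qC])
    fix e j assume ej: "e \<le> K" "j < dims N (1 + e)" and z: "prv N 1 e q j = 0"
    show "\<forall>z\<in>CC. prv N 1 e z j = 0"
    proof (rule ccontr)
      assume "\<not> (\<forall>z\<in>CC. prv N 1 e z j = 0)"
      then have inN: "(e, j) \<in> NZC" using ej by (auto simp: NZC_def Iset_def)
      then have p: "pt (e, j) \<in> CC" "prv N 1 e (pt (e, j)) j \<noteq> 0" using pt by auto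
      have s: "\<sigma> e j \<in> {-1, 1}"
      proof -
        have "sign_ok (\<sigma> e j) (prv N 1 e (pt (e, j)) j)" using p(1) ej by (simp add: Scell_def)
        then have "\<sigma> e j \<noteq> 0" using p(2) by (auto simp: sign_ok_def)
        then show ?thesis using sig by (auto simp: sigv_def)
      qed
      have "(\<Sum>t\<in>Q. cf t * lino N 1 (mk \<sigma>) e t j) \<noteq> 0"
      proof (rule sign_strict_sum[OF Qf s])
        fix t assume t: "t \<in> Q"
        then have "t \<in> CC" using QC by auto
        then show "sign_ok (\<sigma> e j) (lino N 1 (mk \<sigma>) e t j)"
          using C_LC[of t e] ej by (auto simp: Scell_def)
        show "cf t > 0" using cQ by (simp add: cf_def)
      next
        show "pt (e, j) \<in> Q" using inN by (simp add: Q_def)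
        show "lino N 1 (mk \<sigma>) e (pt (e, j)) j \<noteq> 0" using p C_LC[of "pt (e, j)" e] ej by simp
      qed
      then have "lino N 1 (mk \<sigma>) e q j \<noteq> 0" by (metis lq)
      then show False using z qpe[of e] ej by simp
    qed
  qed
  then show ?thesis by blast
qed

lemma Rn_bound:
  assumes "x \<in> Rn n" shows "\<bar>x l\<bar> \<le> (\<Sum>i<n. \<bar>x i\<bar>)"
proof (cases "l < n")
  case True then show ?thesis by (intro member_le_sum) auto
next
  case False then show ?thesis using assms by (simp add: Rn_def sum_nonneg)
qed

lemma SC2:
  assumes q: "q \<in> frelint CC" and ej: "e \<le> K" "j < dims N (1 + e)" and z: "prv N 1 e q j = 0"
  shows "\<forall>x\<in>CC. prv N 1 e x j = 0"
proof (rule ccontr)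
  assume "\<not> (\<forall>x\<in>CC. prv N 1 e x j = 0)"
  then obtain x where x: "x \<in> CC" "prv N 1 e x j \<noteq> 0" by auto
  obtain \<epsilon> where qC: "q \<in> CC" and eps: "\<epsilon> > 0" "\<forall>y\<in>faff CC. (\<forall>l. \<bar>y l - q l\<bar> < \<epsilon>) \<longrightarrow> y \<in> CC"
    using q by (auto simp: frelint_def)
  have qx: "q \<noteq> x" using x z by auto
  define B where "B = 1 + (\<Sum>i<dims N 0. \<bar>(q - x) i\<bar>)"
  have B: "B \<ge> 1" by (simp add: B_def sum_nonneg)
  define t where "t = \<epsilon> / (2 * B)"
  have t: "t > 0" using eps B by (simp add: t_def)
  define y where "y = (\<lambda>l. q l + t * (q - x) l)"
  have qxR: "q - x \<in> Rn (dims N 0)" using qC x CRn by (auto intro: Rn_minus)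
  have close: "\<forall>l. \<bar>y l - q l\<bar> < \<epsilon>"
  proof
    fix l
    have b1: "\<bar>(q - x) l\<bar> \<le> B - 1" using Rn_bound[OF qxR, of l] by (simp add: B_def)
    have "y l - q l = t * (q - x) l" by (simp add: y_def)
    then have "\<bar>y l - q l\<bar> = t * \<bar>(q - x) l\<bar>" using t by (simp add: abs_mult)
    also have "\<dots> \<le> t * (B - 1)" using b1 t by (intro mult_left_mono) auto
    finally have "\<bar>y l - q l\<bar> \<le> t * (B - 1)" .
    also have "\<dots> < t * B" using t by simp
    also have "\<dots> = \<epsilon> / 2" using B by (simp add: t_def)
    finally show "\<bar>y l - q l\<bar> < \<epsilon>" using eps by simp
  qed
  have yfaff: "y \<in> faff CC"
  proof -
    define c where "c = (\<lambda>w::vect. if w = q then 1 + t else - t)"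
    have cq: "c q = 1 + t" by (simp add: c_def)
    have cx: "c x = - t" using qx by (simp add: c_def)
    have s1: "sum c {q, x} = 1" using qx cq cx by simp
    have ac: "affine_comb c {q, x} = (\<lambda>l. c q * q l + c x * x l)"
      unfolding affine_comb_def using qx by (simp add: fun_eq_iff)
    have yeq: "y = affine_comb c {q, x}"
      unfolding ac cq cx y_def by (simp add: fun_eq_iff algebra_simps)
    have T: "finite {q, x}" "{q, x} \<subseteq> CC" "{q, x} \<noteq> {}" using qC x(1) by auto
    show ?thesis unfolding faff_def using T s1 yeq by blast
  qed
  have yC: "y \<in> CC" using eps(2) yfaff close by blast
  have "lino N 1 (mk \<sigma>) e y j = lino N 1 (mk \<sigma>) e q j + t * (lino N 1 (mk \<sigma>) e (q - x) j - lino N 1 (mk \<sigma>) e 0 j)"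
    unfolding y_def by (rule aform_line[OF afl])
  also have "lino N 1 (mk \<sigma>) e (q - x) j - lino N 1 (mk \<sigma>) e 0 j = lino N 1 (mk \<sigma>) e q j - lino N 1 (mk \<sigma>) e x j"
    using aform_diff[OF afl, where y=q and z=x] by simp
  finally have ly: "lino N 1 (mk \<sigma>) e y j = - t * lino N 1 (mk \<sigma>) e x j"
    using z C_LC[OF qC, of e] ej by simp
  have py: "prv N 1 e y j = - t * prv N 1 e x j"
    using ly C_LC[OF yC, of e] C_LC[OF x(1), of e] ej by simp
  have s1: "sign_ok (\<sigma> e j) (prv N 1 e x j)" using x(1) ej by (simp add: Scell_def)
  have "sign_ok (\<sigma> e j) (prv N 1 e y j)" using yC ej unfolding Scell_def by blast
  then have s2: "sign_ok (\<sigma> e j) (- t * prv N 1 e x j)" using py by simp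
  show False
  proof (cases "\<sigma> e j = 0")
    case True then show False using s1 x(2) by (simp add: sign_ok_def)
  next
    case False
    then have "0 \<le> real_of_int (\<sigma> e j) * prv N 1 e x j" "0 \<le> real_of_int (\<sigma> e j) * (- t * prv N 1 e x j)"
      using s1 s2 by (simp_all add: sign_ok_def)
    then have "real_of_int (\<sigma> e j) * prv N 1 e x j = 0" using t
      by (smt (verit, ccfv_SIG) mult.left_commute mult_minus_left mult_pos_pos)
    then show False using False x(2) by simp
  qed
qed

end

context setting
begin

lemma Lf_add: "Lf e j (x + y) = Lf e j x + Lf e j y"
  unfolding Lf_def by (rule aform_lin_add[OF afl])

lemma Lf_scale: "Lf e j (fscale c x) = c * Lf e j x"
  unfolding Lf_def by (rule aform_lin_scale[OF afl])

lemma Lf_diff: "Lf e j (x - y) = lino N 1 (mk \<sigma>) e x j - lino N 1 (mk \<sigma>) e y j"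
  unfolding Lf_def using aform_diff[OF afl, where y=x and z=y] by simp

lemma Lf_zero: "Lf e j 0 = 0"
  by (simp add: Lf_def)

lemma line_lino: "lino N 1 (mk \<sigma>) e (\<lambda>l. v l + t * d l) j = lino N 1 (mk \<sigma>) e v j + t * Lf e j d"
  unfolding Lf_def by (rule aform_line[OF afl])

lemma LemU:
  assumes v: "v \<in> CC" and sv: "sigv \<sigma>'" and vs: "Scell N 1 (Suc K) \<sigma>' = {v}"
    and d: "d \<in> Rn (dims N 0)"
    and dz: "\<And>e j. e \<le> Suc K \<Longrightarrow> j < dims N (1 + e) \<Longrightarrow> prv N 1 e v j = 0 \<Longrightarrow> Lf e j d = 0"
  shows "d = 0"
proof -
  define NZ where "NZ = {z \<in> Iset N 1 (Suc K). prv N 1 (fst z) v (snd z) \<noteq> 0}"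
  have fin: "finite NZ" by (rule finite_subset[OF _ Iset_finite[of N 1 "Suc K"]]) (auto simp: NZ_def)
  obtain t where t: "t > 0" "\<forall>z\<in>NZ. sgn (prv N 1 (fst z) v (snd z) + t * Lf (fst z) (snd z) d) = sgn (prv N 1 (fst z) v (snd z))"
    using line_stable[OF fin, of "\<lambda>z. prv N 1 (fst z) v (snd z)" "\<lambda>z. Lf (fst z) (snd z) d"]
    by (auto simp: NZ_def)
  define y where "y = (\<lambda>l. v l + t * d l)"
  have ly: "lino N 1 (mk \<sigma>) e y j = lino N 1 (mk \<sigma>) e v j + t * Lf e j d" for e j
    unfolding y_def by (rule line_lino)
  have sg: "sgn (lino N 1 (mk \<sigma>) e y j) = sgn (prv N 1 e v j)" if ej: "e \<le> Suc K" "j < dims N (1 + e)" for e j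
  proof -
    have lv: "lino N 1 (mk \<sigma>) e v j = prv N 1 e v j" using C_LC[OF v ej(1)] by simp
    show ?thesis
    proof (cases "prv N 1 e v j = 0")
      case True
      then show ?thesis using ly[of e j] lv dz[OF ej True] by simp
    next
      case False
      then have "(e, j) \<in> NZ" using ej by (simp add: NZ_def Iset_def)
      then show ?thesis using t(2) ly[of e j] lv by auto
    qed
  qed
  have yR: "y \<in> Rn (dims N 0)" using v d CRn by (auto simp: y_def Rn_def)
  have ok: "\<forall>e\<le>K. \<forall>j<dims N (1 + e). sign_ok (\<sigma> e j) (lino N 1 (mk \<sigma>) e y j)"
  proof (intro allI impI)
    fix e j assume ej: "e \<le> K" "j < dims N (1 + e)"
    have so: "sign_ok (\<sigma> e j) (prv N 1 e v j)" using v ej unfolding Scell_def by blast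
    have s: "sgn (lino N 1 (mk \<sigma>) e y j) = sgn (prv N 1 e v j)" using sg ej by simp
    show "sign_ok (\<sigma> e j) (lino N 1 (mk \<sigma>) e y j)"
    proof (cases "prv N 1 e v j = 0")
      case True then show ?thesis using s by (simp add: sign_ok_0 sgn_0_0)
    next
      case False then show ?thesis using s so sign_ok_sgn by metis
    qed
  qed
  have yC: "y \<in> CC" by (rule LCC(1)[OF yR ok])
  have ype: "prv N 1 e y = lino N 1 (mk \<sigma>) e y" if "e \<le> Suc K" for e by (rule LCC(2)[OF yR ok that])
  have "y \<in> Scell N 1 (Suc K) \<sigma>'"
    unfolding Scell_def
  proof (intro CollectI conjI allI impI)
    show "y \<in> Rn (dims N (1 - 1))" using yR by simp
  next
    fix e j assume ej: "e \<le> Suc K" "j < dims N (1 + e)"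
    have so: "sign_ok (\<sigma>' e j) (prv N 1 e v j)" using vs ej unfolding Scell_def by blast
    have s: "sgn (prv N 1 e y j) = sgn (prv N 1 e v j)" using sg[OF ej] ype[OF ej(1)] by simp
    show "sign_ok (\<sigma>' e j) (prv N 1 e y j)"
    proof (cases "prv N 1 e v j = 0")
      case True then show ?thesis using s by (simp add: sign_ok_0 sgn_0_0)
    next
      case False then show ?thesis using s so sign_ok_sgn by metis
    qed
  qed
  then have "y = v" using vs by simp
  then have "t * d l = 0" for l by (metis y_def add_cancel_left_right)
  then show "d = 0" using t(1) by (simp add: fun_eq_iff)
qed

lemma KSET:
  assumes "finite Z"
  shows "dims N 0 \<le> fdim {d \<in> Rn (dims N 0). \<forall>z\<in>Z. Lf (fst z) (snd z) d = 0} + card Z"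
  using assms
proof (induction Z rule: finite_induct)
  case empty
  then show ?case by (simp add: dim_Rn)
next
  case (insert z Z)
  define V where "V = {d \<in> Rn (dims N 0). \<forall>z\<in>Z. Lf (fst z) (snd z) d = 0}"
  have sub: "fv.subspace V"
  proof (unfold fv.subspace_def, intro conjI ballI allI)
    show "0 \<in> V" by (simp add: V_def Lf_zero Rn_def)
    fix x y assume "x \<in> V" "y \<in> V"
    then show "x + y \<in> V" by (simp add: V_def Lf_add Rn_plus)
  next
    fix c x assume "x \<in> V"
    moreover have "fscale c x \<in> Rn (dims N 0)" if "x \<in> Rn (dims N 0)" using that by (simp add: Rn_def fscale_apply)
    ultimately show "fscale c x \<in> V" by (simp add: V_def Lf_scale)
  qed
  have VR: "V \<subseteq> Rn (dims N 0)" by (auto simp: V_def)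
  have "fdim V \<le> fdim {d\<in>V. Lf (fst z) (snd z) d = 0} + 1"
    by (rule dim_ker1[OF sub VR]) (simp_all add: Lf_add Lf_scale)
  moreover have "{d\<in>V. Lf (fst z) (snd z) d = 0} = {d \<in> Rn (dims N 0). \<forall>z'\<in>insert z Z. Lf (fst z') (snd z') d = 0}"
    by (auto simp: V_def)
  ultimately show ?case using insert by (simp add: V_def)
qed

lemma A_eq:
  assumes A: "affine_fun_on (faff CC) A" "\<forall>x\<in>CC. A x = node N i j x"
    and i: "1 \<le> i" "i \<le> K + 2" and x: "x \<in> faff CC"
  shows "A x = lino N 1 (mk \<sigma>) (i - 1) x j"
proof -
  obtain T c where T: "finite T" "T \<subseteq> CC" "T \<noteq> {}" "sum c T = 1" "x = affine_comb c T"
    using x by (auto simp: faff_def)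
  have Tf: "T \<subseteq> faff CC" using T(2) faff_sub by blast
  have "A x = (\<Sum>t\<in>T. c t * A t)" using A(1) T Tf unfolding affine_fun_on_def by blast
  also have "\<dots> = (\<Sum>t\<in>T. c t * lino N 1 (mk \<sigma>) (i - 1) t j)"
  proof (rule sum.cong[OF refl])
    fix t assume t: "t \<in> T"
    then have tC: "t \<in> CC" using T(2) by auto
    have "A t = node N i j t" using A(2) tC by auto
    also have "\<dots> = prv N 1 (i - 1) t j" using i Kb by (intro node_prv) auto
    also have "\<dots> = lino N 1 (mk \<sigma>) (i - 1) t j" using C_LC[OF tC, of "i - 1"] i by simp
    finally show "c t * A t = c t * lino N 1 (mk \<sigma>) (i - 1) t j" by simp
  qed
  also have "\<dots> = lino N 1 (mk \<sigma>) (i - 1) x j"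
    using aform_affine[OF afl T(1) T(4)] T(5) by simp
  finally show ?thesis .
qed

end

context setting
begin

lemma GEN1:
  assumes d: "d \<in> Rn (dims N 0)" "d \<noteq> 0"
  shows "\<exists>j<dims N 1. Lf 0 j d \<noteq> 0"
proof (rule ccontr)
  assume "\<not> (\<exists>j<dims N 1. Lf 0 j d \<noteq> 0)"
  then have z: "\<And>j. j < dims N 1 \<Longrightarrow> aff_layer N 1 d j - aff_layer N 1 0 j = 0" by (simp add: Lf_def)
  define S where "S = {..<dims N 0}"
  have S: "S \<subseteq> {..<dims N 1}" using width by (auto simp: S_def)
  define K1 where "K1 = {y \<in> Rn (dims N 0). \<forall>j\<in>S. aff_layer N 1 y j = 0}"
  have "\<forall>S\<subseteq>{..<dims N 1}. (let K = {y \<in> Rn (dims N (1 - 1)). \<forall>j\<in>S. aff_layer N 1 y j = 0} in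
       (card S \<le> dims N (1 - 1) \<longrightarrow> K \<noteq> {} \<and> affdim K = dims N (1 - 1) - card S) \<and>
       (dims N (1 - 1) < card S \<longrightarrow> K = {}))"
    using gen unfolding generic_def by (rule bspec) simp
  then have "(let K = {y \<in> Rn (dims N (1 - 1)). \<forall>j\<in>S. aff_layer N 1 y j = 0} in
       (card S \<le> dims N (1 - 1) \<longrightarrow> K \<noteq> {} \<and> affdim K = dims N (1 - 1) - card S) \<and>
       (dims N (1 - 1) < card S \<longrightarrow> K = {}))" using S by blast
  then have G: "K1 \<noteq> {} \<and> affdim K1 = 0"
    unfolding Let_def K1_def by (simp add: S_def)
  define p where "p = (SOME x. x \<in> K1)"
  have p: "p \<in> K1" using G unfolding p_def by (metis ex_in_conv someI_ex)
  have af: "aform (dims N 0) (\<lambda>y. aff_layer N 1 y j)" for j using aform_aff_layer[of N 1 j] by simp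
  have "p + d \<in> K1"
  proof -
    have "aff_layer N 1 (p + d) j = 0" if "j \<in> S" for j
    proof -
      have "aff_layer N 1 (p + d) j - aff_layer N 1 p j = aff_layer N 1 d j - aff_layer N 1 0 j"
        using aform_diff[OF af, where y="p + d" and z=p] by simp
      moreover have "aff_layer N 1 d j - aff_layer N 1 0 j = 0" using that S z by auto
      moreover have "aff_layer N 1 p j = 0" using p that by (simp add: K1_def)
      ultimately show ?thesis by simp
    qed
    then show ?thesis using p d by (simp add: K1_def Rn_plus)
  qed
  then have dI: "d \<in> (\<lambda>y. y - p) ` K1" by (intro image_eqI[of _ _ "p + d"]) auto
  have "(\<lambda>y. y - p) ` K1 \<subseteq> Rn (dims N 0)" using p by (auto simp: K1_def Rn_minus)
  then have IR: "(\<lambda>y. y - p) ` K1 \<subseteq> fv.span (Rn (dims N 0))"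
    using fv.span_superset by blast
  have "fdim {d} \<le> fdim ((\<lambda>y. y - p) ` K1)"
    by (rule dim_mono[OF _ IR]) (simp add: fv.span_base dI)
  moreover have "fdim {d} = 1"
    using fv.dim_eq_card_independent[of "{d}"] fv.dependent_single[of d] d(2) by simp
  moreover have "fdim ((\<lambda>y. y - p) ` K1) = 0" using G by (simp add: affdim_def p_def)
  ultimately show False by simp
qed

definition ZC :: "vect \<Rightarrow> (nat \<times> nat) set" where
  "ZC y = {z \<in> Iset N 1 K. prv N 1 (fst z) y (snd z) = 0}"

lemma ZC_finite: "finite (ZC y)"
  by (rule finite_subset[OF _ Iset_finite[of N 1 K]]) (auto simp: ZC_def)

lemma WALK:
  assumes u: "u \<in> CC" and \<delta>: "\<delta> \<in> Rn (dims N 0)"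
    and zl: "\<forall>z\<in>ZC u. Lf (fst z) (snd z) \<delta> = 0"
    and z0: "z0 \<in> Iset N 1 K" "Lf (fst z0) (snd z0) \<delta> \<noteq> 0"
    and r0: "- lino N 1 (mk \<sigma>) (fst z0) u (snd z0) / Lf (fst z0) (snd z0) \<delta> > 0"
  shows "\<exists>y\<in>CC. ZC u \<subset> ZC y"
proof -
  define f where "f z x = lino N 1 (mk \<sigma>) (fst z) x (snd z)" for z x
  define L where "L z = Lf (fst z) (snd z) \<delta>" for z
  define r where "r z = - f z u / L z" for z
  define NZ where "NZ = {z \<in> Iset N 1 K. L z \<noteq> 0 \<and> r z > 0}"
  have finNZ: "finite NZ" by (rule finite_subset[OF _ Iset_finite[of N 1 K]]) (auto simp: NZ_def)
  have z0N: "z0 \<in> NZ" using z0 r0 by (simp add: NZ_def L_def r_def f_def)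
  define s where "s = Min (r ` NZ)"
  have sin: "s \<in> r ` NZ" unfolding s_def using finNZ z0N by (intro Min_in) auto
  then obtain zs where zs: "zs \<in> NZ" "r zs = s" by auto
  have s_le: "s \<le> r z" if "z \<in> NZ" for z unfolding s_def using finNZ that by (intro Min_le) auto
  have spos: "s > 0" using zs by (simp add: NZ_def)
  have fu: "f z u = prv N 1 (fst z) u (snd z)" if "z \<in> Iset N 1 K" for z
    using C_LC[OF u, of "fst z"] that by (auto simp: f_def Iset_def)
  have fu0: "f z u \<noteq> 0" if "z \<in> Iset N 1 K" "L z \<noteq> 0" for z
  proof
    assume "f z u = 0"
    then have "z \<in> ZC u" using that fu by (simp add: ZC_def)
    then show False using zl that by (simp add: L_def)
  qed
  define y where "y = (\<lambda>l. u l + s * \<delta> l)"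
  have fy: "f z y = f z u + s * L z" for z unfolding f_def L_def y_def by (rule line_lino)
  have yR: "y \<in> Rn (dims N 0)" using u \<delta> CRn by (auto simp: y_def Rn_def)
  have fyf: "f z y = f z u * (1 - s / r z)" if "z \<in> Iset N 1 K" "L z \<noteq> 0" for z
  proof -
    have "f z u \<noteq> 0" by (rule fu0[OF that])
    then show ?thesis using that(2) by (simp add: fy r_def field_simps)
  qed
  have ok: "\<forall>e\<le>K. \<forall>j<dims N (1 + e). sign_ok (\<sigma> e j) (lino N 1 (mk \<sigma>) e y j)"
  proof (intro allI impI)
    fix e j assume ej: "e \<le> K" "j < dims N (1 + e)"
    define z where "z = (e, j)"
    have zI: "z \<in> Iset N 1 K" using ej by (simp add: z_def Iset_def)
    have su: "sign_ok (\<sigma> e j) (f z u)" using u ej fu[OF zI] unfolding Scell_def z_def by auto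
    have "sign_ok (\<sigma> e j) (f z y)"
    proof (cases "L z = 0")
      case True then show ?thesis using su fy[of z] by simp
    next
      case False
      have fac: "1 - s / r z \<ge> 0"
      proof (cases "r z > 0")
        case True
        then have "z \<in> NZ" using zI False by (simp add: NZ_def)
        then have "s \<le> r z" by (rule s_le)
        then show ?thesis using True by (simp add: divide_le_eq_1)
      next
        case False
        then have "s / r z \<le> 0" using spos by (simp add: divide_nonneg_nonpos)
        then show ?thesis by simp
      qed
      show ?thesis using fyf[OF zI False] sign_ok_scale[OF su fac] by simp
    qed
    then show "sign_ok (\<sigma> e j) (lino N 1 (mk \<sigma>) e y j)" by (simp add: f_def z_def)
  qed
  have yC: "y \<in> CC" by (rule LCC(1)[OF yR ok])
  have fyp: "f z y = prv N 1 (fst z) y (snd z)" if "z \<in> Iset N 1 K" for z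
    using LCC(2)[OF yR ok, of "fst z"] that by (auto simp: f_def Iset_def)
  have sub: "ZC u \<subseteq> ZC y"
  proof
    fix z assume z: "z \<in> ZC u"
    then have zI: "z \<in> Iset N 1 K" and "prv N 1 (fst z) u (snd z) = 0" by (auto simp: ZC_def)
    then have "f z u = 0" using fu by simp
    moreover have "L z = 0" using zl z by (simp add: L_def)
    ultimately have "f z y = 0" using fy by simp
    then show "z \<in> ZC y" using fyp[OF zI] zI by (simp add: ZC_def)
  qed
  have zsI: "zs \<in> Iset N 1 K" "L zs \<noteq> 0" using zs by (auto simp: NZ_def)
  have "f zs y = 0" using fyf[OF zsI] zs spos by simp
  then have "zs \<in> ZC y" using fyp[OF zsI(1)] zsI by (simp add: ZC_def)
  moreover have "zs \<notin> ZC u" using fu0[OF zsI] fu[OF zsI(1)] by (simp add: ZC_def)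
  ultimately show ?thesis using sub yC by blast
qed

lemma VERT:
  assumes v: "v \<in> CC"
  shows "\<exists>u. is_vertex u CC \<and> (\<forall>e\<le>K. \<forall>j<dims N (1 + e). prv N 1 e v j = 0 \<longrightarrow> prv N 1 e u j = 0)"
proof -
  define F where "F = {y \<in> CC. \<forall>e\<le>K. \<forall>j<dims N (1 + e). prv N 1 e v j = 0 \<longrightarrow> prv N 1 e y j = 0}"
  have vF: "v \<in> F" using v by (simp add: F_def)
  have bnd: "\<forall>y. y \<in> F \<longrightarrow> card (ZC y) < card (Iset N 1 K) + 1"
  proof (intro allI impI)
    fix y
    have "card (ZC y) \<le> card (Iset N 1 K)" by (rule card_mono[OF Iset_finite]) (auto simp: ZC_def)
    then show "card (ZC y) < card (Iset N 1 K) + 1" by simp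
  qed
  obtain u where uF: "u \<in> F" and umax: "\<forall>y. y \<in> F \<longrightarrow> card (ZC y) \<le> card (ZC u)"
    using Lattices_Big.ex_has_greatest_nat[of "\<lambda>y. y \<in> F" v "\<lambda>y. card (ZC y)", OF vF bnd] by blast
  have uC: "u \<in> CC" using uF by (simp add: F_def)
  have "is_vertex u CC"
    unfolding is_vertex_def
  proof (intro conjI notI uC)
    assume "\<exists>a\<in>CC. \<exists>b\<in>CC. a \<noteq> b \<and> (\<exists>t>0. t < 1 \<and> u = (\<lambda>l. (1 - t) * a l + t * b l))"
    then obtain a b t where ab: "a \<in> CC" "b \<in> CC" "a \<noteq> b" "t > 0" "t < 1" "u = (\<lambda>l. (1 - t) * a l + t * b l)"
      by blast
    define d where "d = b - a"
    have dR: "d \<in> Rn (dims N 0)" using ab CRn by (auto simp: d_def intro: Rn_minus)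
    have d0: "d \<noteq> 0" using ab(3) by (simp add: d_def)
    have ueq: "u = (\<lambda>l. a l + t * d l)" using ab(6) by (simp add: d_def fun_eq_iff algebra_simps)
    have zl: "\<forall>z\<in>ZC u. Lf (fst z) (snd z) d = 0"
    proof
      fix z assume z: "z \<in> ZC u"
      obtain e j where ez: "z = (e, j)" "e \<le> K" "j < dims N (1 + e)" using z by (auto simp: ZC_def Iset_def)
      have pu: "prv N 1 e u j = 0" using z ez by (simp add: ZC_def)
      have la: "sign_ok (\<sigma> e j) (lino N 1 (mk \<sigma>) e a j)" using ab(1) ez C_LC[OF ab(1), of e] unfolding Scell_def by auto
      have lb: "sign_ok (\<sigma> e j) (lino N 1 (mk \<sigma>) e b j)" using ab(2) ez C_LC[OF ab(2), of e] unfolding Scell_def by auto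
      have lu: "lino N 1 (mk \<sigma>) e u j = lino N 1 (mk \<sigma>) e a j + t * Lf e j d"
        unfolding ueq by (rule line_lino)
      have ld: "Lf e j d = lino N 1 (mk \<sigma>) e b j - lino N 1 (mk \<sigma>) e a j" unfolding d_def by (rule Lf_diff)
      have "lino N 1 (mk \<sigma>) e u j = 0" using pu C_LC[OF uC, of e] ez by simp
      then have "(1 - t) * lino N 1 (mk \<sigma>) e a j + t * lino N 1 (mk \<sigma>) e b j = 0"
        using lu ld by (simp add: algebra_simps)
      then have "lino N 1 (mk \<sigma>) e a j = 0 \<and> lino N 1 (mk \<sigma>) e b j = 0"
        using sign_ok_conv[OF _ la lb ab(4) ab(5)] sig by (auto simp: sigv_def)
      then show "Lf (fst z) (snd z) d = 0" using ld ez by simp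
    qed
    obtain j0 where j0: "j0 < dims N 1" "Lf 0 j0 d \<noteq> 0" using GEN1[OF dR d0] by blast
    define z0 where "z0 = (0::nat, j0)"
    have z0I: "z0 \<in> Iset N 1 K" using j0 by (simp add: z0_def Iset_def)
    have fz0: "lino N 1 (mk \<sigma>) 0 u j0 \<noteq> 0"
    proof
      assume "lino N 1 (mk \<sigma>) 0 u j0 = 0"
      then have "z0 \<in> ZC u" using z0I C_LC[OF uC, of 0] by (simp add: ZC_def z0_def)
      then have "Lf (fst z0) (snd z0) d = 0" using zl by blast
      then show False using j0 by (simp add: z0_def)
    qed
    have "\<exists>y\<in>CC. ZC u \<subset> ZC y"
    proof (cases "- lino N 1 (mk \<sigma>) 0 u j0 / Lf 0 j0 d > 0")
      case True
      show ?thesis by (rule WALK[OF uC dR zl z0I]) (use True j0 in \<open>simp_all add: z0_def\<close>)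
    next
      case False
      define d' where "d' = fscale (-1) d"
      have d'R: "d' \<in> Rn (dims N 0)" using dR by (simp add: d'_def Rn_def fscale_apply)
      have Ld': "Lf e j d' = - Lf e j d" for e j unfolding d'_def Lf_scale by simp
      define A0 where "A0 = lino N 1 (mk \<sigma>) 0 u j0"
      define L0 where "L0 = Lf 0 j0 d"
      have ne: "A0 / L0 \<noteq> 0" using fz0 j0 by (simp add: A0_def L0_def)
      have e1: "- A0 / L0 = - (A0 / L0)" by simp
      have e2: "- A0 / (- L0) = A0 / L0" by simp
      have "\<not> (- A0 / L0 > 0)" using False by (simp add: A0_def L0_def)
      then have "- A0 / (- L0) > 0" using ne e1 e2 by linarith
      then have "- lino N 1 (mk \<sigma>) 0 u j0 / Lf 0 j0 d' > 0" by (simp add: Ld' A0_def L0_def)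
      then show ?thesis
        by (intro WALK[OF uC d'R _ z0I]) (use zl j0 in \<open>simp_all add: z0_def Ld'\<close>)
    qed
    then obtain y where y: "y \<in> CC" "ZC u \<subset> ZC y" by blast
    have "y \<in> F"
    proof -
      have "prv N 1 e y j = 0" if "e \<le> K" "j < dims N (1 + e)" "prv N 1 e v j = 0" for e j
      proof -
        have "prv N 1 e u j = 0" using uF that by (simp add: F_def)
        then have "(e, j) \<in> ZC u" using that by (simp add: ZC_def Iset_def)
        then have "(e, j) \<in> ZC y" using y by auto
        then show ?thesis by (simp add: ZC_def)
      qed
      then show ?thesis using y(1) by (simp add: F_def)
    qed
    moreover have "card (ZC u) < card (ZC y)" using y(2) ZC_finite by (intro psubset_card_mono) auto
    ultimately show False using umax by fastforce
  qed
  then show ?thesis using uF by (auto simp: F_def)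
qed

end

declare prv.simps[simp del] lino.simps[simp del]

lemma Pset_finite: fixes N :: net shows "finite {(i, j). 1 \<le> i \<and> i < K + 2 \<and> j < dims N i}"
proof -
  have "{(i, j). 1 \<le> i \<and> i < K + 2 \<and> j < dims N i} \<subseteq> (\<lambda>(e, j). (Suc e, j)) ` Iset N 1 K"
  proof clarify
    fix i j assume h: "1 \<le> i" "i < K + 2" "j < dims N i"
    then have "(i - 1, j) \<in> Iset N 1 K" by (simp add: Iset_def)
    moreover have "(i, j) = (\<lambda>(e, j). (Suc e, j)) (i - 1, j)" using h by simp
    ultimately show "(i, j) \<in> (\<lambda>(e, j). (Suc e, j)) ` Iset N 1 K" by blast
  qed
  then show ?thesis by (rule finite_subset) (simp add: Iset_finite)
qed

context setting
begin

lemma node_eq: "1 \<le> i \<Longrightarrow> i \<le> K + 2 \<Longrightarrow> node N i j x = prv N 1 (i - 1) x j"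
  using Kb by (intro node_prv) auto

lemma PART2:
  assumes Ah: "\<forall>i\<in>{1..K+2}. \<forall>j<dims N i. affine_fun_on (faff CC) (A i j) \<and> (\<forall>x\<in>CC. A i j x = node N i j x)"
    and J: "J \<subseteq> {..<dims N (K+2)}" and P: "P \<subseteq> {(i, j). 1 \<le> i \<and> i < K+2 \<and> j < dims N i}"
    and cJ: "1 \<le> card J" "card J \<le> dims N 0" and cP: "card P = dims N 0 - card J"
    and sys: "{y \<in> faff CC. (\<forall>j\<in>J. A (K+2) j y = 0) \<and> (\<forall>(i, j)\<in>P. A i j y = 0)} = {x}"
  shows "({x} \<in> canon N 1 (Suc K) \<and> x \<in> closure CC) \<longleftrightarrow>
         (\<forall>i j. 1 \<le> i \<and> i \<le> K + 1 \<and> j < dims N i \<and> (i, j) \<notin> P \<longrightarrow> sgn_pt N i j x = sgn_cell N i j CC)"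
proof -
  have AJ: "A (K+2) j y = lino N 1 (mk \<sigma>) (Suc K) y j" if "j \<in> J" "y \<in> faff CC" for j y
    using A_eq[of "A (K+2) j" "K+2" j y] Ah that J by auto
  have AP: "A i j y = lino N 1 (mk \<sigma>) (i - 1) y j" if "(i, j) \<in> P" "y \<in> faff CC" for i j y
    using A_eq[of "A i j" i j y] Ah that P by auto
  have sysL: "{y \<in> faff CC. (\<forall>j\<in>J. lino N 1 (mk \<sigma>) (Suc K) y j = 0) \<and> (\<forall>(i, j)\<in>P. lino N 1 (mk \<sigma>) (i - 1) y j = 0)} = {x}"
  proof -
    have eqv: "((\<forall>j\<in>J. A (K+2) j y = 0) \<and> (\<forall>(i, j)\<in>P. A i j y = 0)) \<longleftrightarrow>
       ((\<forall>j\<in>J. lino N 1 (mk \<sigma>) (Suc K) y j = 0) \<and> (\<forall>(i, j)\<in>P. lino N 1 (mk \<sigma>) (i - 1) y j = 0))"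
      if y: "y \<in> faff CC" for y
    proof -
      have "(\<forall>j\<in>J. A (K+2) j y = 0) \<longleftrightarrow> (\<forall>j\<in>J. lino N 1 (mk \<sigma>) (Suc K) y j = 0)"
        using AJ[OF _ y] by simp
      moreover have "(\<forall>(i, j)\<in>P. A i j y = 0) \<longleftrightarrow> (\<forall>(i, j)\<in>P. lino N 1 (mk \<sigma>) (i - 1) y j = 0)"
        using AP[OF _ y] by auto
      ultimately show ?thesis by simp
    qed
    have "{y \<in> faff CC. (\<forall>j\<in>J. lino N 1 (mk \<sigma>) (Suc K) y j = 0) \<and> (\<forall>(i, j)\<in>P. lino N 1 (mk \<sigma>) (i - 1) y j = 0)}
        = {y \<in> faff CC. (\<forall>j\<in>J. A (K+2) j y = 0) \<and> (\<forall>(i, j)\<in>P. A i j y = 0)}"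
      using eqv by blast
    then show ?thesis using sys by simp
  qed
  have xf: "x \<in> faff CC" using sysL by auto
  have xR: "x \<in> Rn (dims N 0)" using faff_Rn[OF CRn] xf by auto
  have xJ: "\<forall>j\<in>J. lino N 1 (mk \<sigma>) (Suc K) x j = 0" using sysL by auto
  have xP: "\<forall>(i, j)\<in>P. lino N 1 (mk \<sigma>) (i - 1) x j = 0" using sysL by auto
  define q0 where "q0 = (SOME y. y \<in> frelint CC)"
  have q0fr: "q0 \<in> frelint CC" unfolding q0_def using SC1 by (metis someI_ex)
  have q0C: "q0 \<in> CC" using q0fr by (auto simp: frelint_def)
  have scell: "sgn_cell N i j CC = sgn (prv N 1 (i - 1) q0 j)" if "1 \<le> i" "i \<le> K + 2" for i j
    unfolding sgn_cell_def q0_def[symmetric] using node_eq[OF that] by simp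
  have spt: "sgn_pt N i j y = sgn (prv N 1 (i - 1) y j)" if "1 \<le> i" "i \<le> K + 2" for i j y
    unfolding sgn_pt_def using node_eq[OF that] by simp
  have finP: "finite P" using P Pset_finite finite_subset by blast
  have finJ: "finite J" using J finite_subset by blast
  show ?thesis
  proof
    assume "{x} \<in> canon N 1 (Suc K) \<and> x \<in> closure CC"
    then have xC: "x \<in> CC" using closure_C by simp
    show "\<forall>i j. 1 \<le> i \<and> i \<le> K + 1 \<and> j < dims N i \<and> (i, j) \<notin> P \<longrightarrow> sgn_pt N i j x = sgn_cell N i j CC"
    proof (intro allI impI)
      fix i j assume h: "1 \<le> i \<and> i \<le> K + 1 \<and> j < dims N i \<and> (i, j) \<notin> P"
      define e where "e = i - 1"
      have eK: "e \<le> K" "j < dims N (1 + e)" "i = Suc e" using h by (auto simp: e_def)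
      have so_q: "sign_ok (\<sigma> e j) (prv N 1 e q0 j)" using q0C eK unfolding Scell_def by blast
      have so_x: "sign_ok (\<sigma> e j) (prv N 1 e x j)" using xC eK unfolding Scell_def by blast
      have "sgn (prv N 1 e x j) = sgn (prv N 1 e q0 j)"
      proof (cases "prv N 1 e q0 j = 0")
        case True
        then have "prv N 1 e x j = 0" using SC2[OF q0fr eK(1,2) True] xC by blast
        then show ?thesis using True by simp
      next
        case False
        have "prv N 1 e x j \<noteq> 0"
        proof
          assume x0: "prv N 1 e x j = 0"
          define Img where "Img = (\<lambda>(i, j). (i - 1, j)) ` P \<union> (\<lambda>j. (Suc K, j)) ` J \<union> {(e, j)}"
          have sub: "Img \<subseteq> zer N 1 x"
          proof
            fix z assume "z \<in> Img"
            then consider (a) i' j' where "(i', j') \<in> P" "z = (i' - 1, j')" | (b) j' where "j' \<in> J" "z = (Suc K, j')" | (c) "z = (e, j)"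
              unfolding Img_def by fastforce
            then show "z \<in> zer N 1 x"
            proof cases
              case a
              then have "1 \<le> i'" "i' < K + 2" "j' < dims N i'" using subsetD[OF P a(1)] by auto
              moreover have "lino N 1 (mk \<sigma>) (i' - 1) x j' = 0" using xP a by auto
              moreover have "prv N 1 (i' - 1) x = lino N 1 (mk \<sigma>) (i' - 1) x" using C_LC[OF xC] calculation by simp
              ultimately show ?thesis using a Kb by (simp add: zer_def)
            next
              case b
              then have "j' < dims N (K + 2)" using J by auto
              moreover have "lino N 1 (mk \<sigma>) (Suc K) x j' = 0" using xJ b by auto
              moreover have "prv N 1 (Suc K) x = lino N 1 (mk \<sigma>) (Suc K) x" by (rule C_LC[OF xC]) simp
              ultimately show ?thesis using b Kb by (simp add: zer_def)
            next
              case c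
              then show ?thesis using x0 eK Kb by (simp add: zer_def)
            qed
          qed
          define g where "g = (\<lambda>(i::nat, j::nat). (i - 1, j))"
          have Pf: "1 \<le> i' \<and> i' < K + 2 \<and> j' < dims N i'" if "(i', j') \<in> P" for i' j'
            using subsetD[OF P that] by simp
          have f1: "fst p \<le> K" if "p \<in> g ` P" for p
          proof -
            obtain i' j' where ij: "(i', j') \<in> P" "p = g (i', j')" using \<open>p \<in> g ` P\<close> by auto
            have "i' < K + 2" using Pf[OF ij(1)] by simp
            then show ?thesis using ij(2) by (simp add: g_def)
          qed
          have d1: "g ` P \<inter> (\<lambda>j. (Suc K, j)) ` J = {}"
          proof (rule equals0I)
            fix p assume "p \<in> g ` P \<inter> (\<lambda>j. (Suc K, j)) ` J"
            then have "fst p \<le> K" "fst p = Suc K" using f1 by auto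
            then show False by simp
          qed
          have d2: "(g ` P \<union> (\<lambda>j. (Suc K, j)) ` J) \<inter> {(e, j)} = {}"
          proof (rule equals0I)
            fix p assume p: "p \<in> (g ` P \<union> (\<lambda>j. (Suc K, j)) ` J) \<inter> {(e, j)}"
            then have pe: "p = (e, j)" by simp
            show False
            proof (cases "p \<in> g ` P")
              case True
              then obtain i' j' where ij': "(i', j') \<in> P" "p = g (i', j')" by auto
              then have "i' - 1 = e" "j' = j" using pe by (auto simp: g_def)
              moreover have "1 \<le> i'" using Pf[OF ij'(1)] by simp
              ultimately have "(i, j) = (i', j')" using eK by auto
              then show False using ij'(1) h by simp
            next
              case False
              then have "p \<in> (\<lambda>j. (Suc K, j)) ` J" using p by auto
              then have "fst p = Suc K" by auto
              then show False using pe eK by simp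
            qed
          qed
          have i1: "inj_on g P"
          proof (rule inj_onI)
            fix p1 p2 assume p: "p1 \<in> P" "p2 \<in> P" "g p1 = g p2"
            obtain i1 j1 i2 j2 where "p1 = (i1, j1)" "p2 = (i2, j2)" by (cases p1, cases p2)
            moreover have "1 \<le> i1" "1 \<le> i2" using Pf p calculation by auto
            ultimately show "p1 = p2" using p(3) by (auto simp: g_def)
          qed
          have Img': "Img = g ` P \<union> (\<lambda>j. (Suc K, j)) ` J \<union> {(e, j)}" by (simp add: Img_def g_def)
          have "card Img = card (g ` P \<union> (\<lambda>j. (Suc K, j)) ` J) + card {(e, j)}"
            unfolding Img' by (rule card_Un_disjoint) (use d2 finP finJ in auto)
          also have "card (g ` P \<union> (\<lambda>j. (Suc K, j)) ` J) = card (g ` P) + card ((\<lambda>j. (Suc K, j)) ` J)"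
            by (rule card_Un_disjoint) (use d1 finP finJ in auto)
          also have "card (g ` P) = card P" by (rule card_image[OF i1])
          also have "card ((\<lambda>j. (Suc K, j)) ` J) = card J" by (rule card_image) (auto simp: inj_on_def)
          finally have "card Img = card P + card J + 1" by simp
          then have "card Img = dims N 0 + 1" using cP cJ by simp
          moreover have "card Img \<le> card (zer N 1 x)" by (rule card_mono[OF zer_finite sub])
          moreover have "card (zer N 1 x) \<le> dims N 0" by (rule KL1_count[OF gen st xR])
          ultimately show False by simp
        qed
        then show ?thesis using sign_ok_same_sgn[OF _ so_x so_q _ False] sig by (auto simp: sigv_def)
      qed
      then show "sgn_pt N i j x = sgn_cell N i j CC"
        using spt[of i j x] scell[of i j] h by (simp add: e_def)
    qed
  next
    assume R: "\<forall>i j. 1 \<le> i \<and> i \<le> K + 1 \<and> j < dims N i \<and> (i, j) \<notin> P \<longrightarrow> sgn_pt N i j x = sgn_cell N i j CC"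
    have Q: "\<forall>e'<e. \<forall>j<dims N (1 + e'). sign_ok (\<sigma> e' j) (prv N 1 e' x j)" if "e \<le> Suc K" for e
      using that
    proof (induction e)
      case 0 then show ?case by simp
    next
      case (Suc e)
      have IH: "\<forall>e'<e. \<forall>j<dims N (1 + e'). sign_ok (\<sigma> e' j) (prv N 1 e' x j)" using Suc by simp
      have pe: "prv N 1 e x = lino N 1 (mk \<sigma>) e x" by (rule LC1[OF sig IH])
      have "sign_ok (\<sigma> e j) (prv N 1 e x j)" if j: "j < dims N (1 + e)" for j
      proof (cases "(Suc e, j) \<in> P")
        case True
        then have "lino N 1 (mk \<sigma>) e x j = 0" using xP by auto
        then show ?thesis using pe by (simp add: sign_ok_0)
      next
        case False
        have "sgn_pt N (Suc e) j x = sgn_cell N (Suc e) j CC" using R False j Suc.prems by auto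
        then have s: "sgn (prv N 1 e x j) = sgn (prv N 1 e q0 j)"
          using spt[of "Suc e" j x] scell[of "Suc e" j] Suc.prems by simp
        have so: "sign_ok (\<sigma> e j) (prv N 1 e q0 j)" using q0C j Suc.prems unfolding Scell_def by auto
        show ?thesis
        proof (cases "prv N 1 e q0 j = 0")
          case True then show ?thesis using s by (simp add: sign_ok_0 sgn_0_0)
        next
          case False then show ?thesis using s so sign_ok_sgn by metis
        qed
      qed
      then show ?case using IH by (auto simp: less_Suc_eq)
    qed
    have Qall: "\<forall>e'<Suc K. \<forall>j<dims N (1 + e'). sign_ok (\<sigma> e' j) (prv N 1 e' x j)" using Q by blast
    have xC: "x \<in> CC" using Qall xR by (auto simp: Scell_def)
    define \<tau> where "\<tau> = (\<lambda>e j. isgn (prv N 1 e x j))"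
    define T where "T = Scell N 1 (Suc K) \<tau>"
    have xT: "x \<in> T" using xR by (simp add: T_def Scell_def \<tau>_def isgn_ok)
    have Tc: "T \<in> canon N 1 (Suc K)" unfolding T_def \<tau>_def
      by (rule Scell_canon) (use Kb xT in \<open>auto simp: sigv_isgn T_def \<tau>_def\<close>)
    have "T \<subseteq> {x}"
    proof
      fix z assume zT: "z \<in> T"
      have zR: "z \<in> Rn (dims N 0)" using zT by (simp add: T_def Scell_def)
      have zsi: "sign_ok (isgn (prv N 1 e x j)) (prv N 1 e z j)" if "e \<le> Suc K" "j < dims N (1 + e)" for e j
        using zT that unfolding T_def Scell_def \<tau>_def by blast
      have zC: "z \<in> CC"
      proof -
        have "sign_ok (\<sigma> e j) (prv N 1 e z j)" if "e \<le> K" "j < dims N (1 + e)" for e j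
        proof (rule sign_ok_isgn)
          show "sign_ok (isgn (prv N 1 e x j)) (prv N 1 e z j)" using zsi that by simp
          show "sign_ok (\<sigma> e j) (prv N 1 e x j)" using xC that unfolding Scell_def by blast
          show "\<sigma> e j \<in> {-1, 0, 1}" using sig by (simp add: sigv_def)
        qed
        then show ?thesis using zR by (simp add: Scell_def)
      qed
      have z0: "prv N 1 e z j = 0" if "e \<le> Suc K" "j < dims N (1 + e)" "prv N 1 e x j = 0" for e j
        using zsi[OF that(1,2)] that(3) by (simp add: isgn_def sign_ok_def)
      have "z \<in> {y \<in> faff CC. (\<forall>j\<in>J. lino N 1 (mk \<sigma>) (Suc K) y j = 0) \<and> (\<forall>(i, j)\<in>P. lino N 1 (mk \<sigma>) (i - 1) y j = 0)}"
      proof (intro CollectI conjI ballI)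
        show "z \<in> faff CC" using zC faff_sub by blast
      next
        fix j assume j: "j \<in> J"
        then have jd: "j < dims N (1 + Suc K)" using J by auto
        have "prv N 1 (Suc K) x j = 0" using xJ j C_LC[OF xC, of "Suc K"] by simp
        then have "prv N 1 (Suc K) z j = 0" using z0 jd by simp
        then show "lino N 1 (mk \<sigma>) (Suc K) z j = 0" using C_LC[OF zC, of "Suc K"] by simp
      next
        fix p assume p: "p \<in> P"
        obtain i j where ij: "p = (i, j)" by (cases p)
        have h: "1 \<le> i" "i < K + 2" "j < dims N i" using P p ij by auto
        have e: "i - 1 \<le> Suc K" "j < dims N (1 + (i - 1))" using h by auto
        have "prv N 1 (i - 1) x j = 0" using xP p ij C_LC[OF xC e(1)] by auto
        then have "prv N 1 (i - 1) z j = 0" using z0 e by simp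
        then have "lino N 1 (mk \<sigma>) (i - 1) z j = 0" using C_LC[OF zC e(1)] by simp
        then show "case p of (i, j) \<Rightarrow> lino N 1 (mk \<sigma>) (i - 1) z j = 0" using ij by simp
      qed
      then show "z \<in> {x}" using sysL by blast
    qed
    then have "T = {x}" using xT by auto
    then show "{x} \<in> canon N 1 (Suc K) \<and> x \<in> closure CC" using Tc xC closure_C by simp
  qed
qed

end

context setting
begin

lemma PART1:
  assumes Ah: "\<forall>i\<in>{1..K+2}. \<forall>j<dims N i. affine_fun_on (faff CC) (A i j) \<and> (\<forall>x\<in>CC. A i j x = node N i j x)"
    and vc: "{v} \<in> canon N 1 (Suc K)" and vcl: "v \<in> closure CC" and vn: "{v} \<notin> canon N 1 K"
  shows "\<exists>J P. J \<subseteq> {..<dims N (K+2)} \<and> P \<subseteq> {(i, j). 1 \<le> i \<and> i < K+2 \<and> j < dims N i} \<and>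
           1 \<le> card J \<and> card J \<le> dims N 0 \<and> card P = dims N 0 - card J \<and>
           (\<exists>u. is_vertex u CC \<and> (\<forall>(i, j)\<in>P. node N i j u = 0)) \<and>
           {x \<in> faff CC. (\<forall>j\<in>J. A (K+2) j x = 0) \<and> (\<forall>(i, j)\<in>P. A i j x = 0)} = {v}"
proof -
  have vC: "v \<in> CC" using vcl closure_C by simp
  have vR: "v \<in> Rn (dims N 0)" using vC CRn by auto
  obtain \<sigma>' where s': "sigv \<sigma>'" "{v} = Scell N 1 (Suc K) \<sigma>'"
    using canon_Scell[of 1 "Suc K" N "{v}"] vc Kb by auto
  define J where "J = {j. j < dims N (K+2) \<and> prv N 1 (Suc K) v j = 0}"
  define P where "P = {(i, j). 1 \<le> i \<and> i < K+2 \<and> j < dims N i \<and> prv N 1 (i - 1) v j = 0}"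
  define Zall where "Zall = {z \<in> Iset N 1 (Suc K). prv N 1 (fst z) v (snd z) = 0}"
  have finZ: "finite Zall" by (rule finite_subset[OF _ Iset_finite[of N 1 "Suc K"]]) (auto simp: Zall_def)
  have finJ: "finite J" by (auto simp: J_def)
  have finP: "finite P" by (rule finite_subset[OF _ Pset_finite[of K N]]) (auto simp: P_def)
  have lv: "lino N 1 (mk \<sigma>) e v j = prv N 1 e v j" if "e \<le> Suc K" for e j
    using C_LC[OF vC that] by simp
  have ker: "d = 0" if d: "d \<in> Rn (dims N 0)" and dz: "\<forall>z\<in>Zall. Lf (fst z) (snd z) d = 0" for d
  proof (rule LemU[OF vC s'(1) s'(2)[symmetric] d])
    fix e j assume "e \<le> Suc K" "j < dims N (1 + e)" "prv N 1 e v j = 0"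
    then have "(e, j) \<in> Zall" by (simp add: Zall_def Iset_def)
    then show "Lf e j d = 0" using dz by auto
  qed
  have c1: "dims N 0 \<le> card Zall"
  proof -
    have k: "dims N 0 \<le> fdim {d \<in> Rn (dims N 0). \<forall>z\<in>Zall. Lf (fst z) (snd z) d = 0} + card Zall"
      by (rule KSET[OF finZ])
    have "{d \<in> Rn (dims N 0). \<forall>z\<in>Zall. Lf (fst z) (snd z) d = 0} \<subseteq> fv.span {}"
      using ker fv.span_zero by auto
    then have "fdim {d \<in> Rn (dims N 0). \<forall>z\<in>Zall. Lf (fst z) (snd z) d = 0} \<le> card ({} :: vect set)"
      by (rule fv.dim_le_card) simp
    then show ?thesis using k by simp
  qed
  have c2: "card Zall \<le> dims N 0"
  proof -
    have "Zall \<subseteq> zer N 1 v" using Kb by (auto simp: Zall_def zer_def Iset_def)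
    then have "card Zall \<le> card (zer N 1 v)" by (rule card_mono[OF zer_finite])
    then show ?thesis using KL1_count[OF gen st vR] by simp
  qed
  define g where "g = (\<lambda>(i::nat, j::nat). (i - 1, j))"
  have Zeq: "Zall = g ` P \<union> (\<lambda>j. (Suc K, j)) ` J"
  proof (rule set_eqI)
    fix z :: "nat \<times> nat"
    obtain e j where z: "z = (e, j)" by (cases z)
    show "z \<in> Zall \<longleftrightarrow> z \<in> g ` P \<union> (\<lambda>j. (Suc K, j)) ` J"
    proof
      assume "z \<in> Zall"
      then have h: "e \<le> Suc K" "j < dims N (1 + e)" "prv N 1 e v j = 0" by (auto simp: Zall_def Iset_def z)
      show "z \<in> g ` P \<union> (\<lambda>j. (Suc K, j)) ` J"
      proof (cases "e = Suc K")
        case True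
        then have "j \<in> J" using h by (simp add: J_def)
        then show ?thesis using True z by auto
      next
        case False
        then have "(Suc e, j) \<in> P" using h by (simp add: P_def)
        moreover have "z = g (Suc e, j)" by (simp add: g_def z)
        ultimately show ?thesis by blast
      qed
    next
      assume "z \<in> g ` P \<union> (\<lambda>j. (Suc K, j)) ` J"
      then show "z \<in> Zall"
      proof
        assume "z \<in> g ` P"
        then obtain i j' where ij: "(i, j') \<in> P" "z = g (i, j')" by auto
        then show ?thesis by (auto simp: P_def g_def Zall_def Iset_def)
      next
        assume "z \<in> (\<lambda>j. (Suc K, j)) ` J"
        then show ?thesis by (auto simp: J_def Zall_def Iset_def)
      qed
    qed
  qed
  have d1: "g ` P \<inter> (\<lambda>j. (Suc K, j)) ` J = {}"
  proof (rule equals0I)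
    fix p assume "p \<in> g ` P \<inter> (\<lambda>j. (Suc K, j)) ` J"
    then obtain i j where "(i, j) \<in> P" "p = g (i, j)" "fst p = Suc K" by auto
    then show False by (auto simp: P_def g_def)
  qed
  have i1: "inj_on g P"
  proof (rule inj_onI)
    fix p1 p2 assume p: "p1 \<in> P" "p2 \<in> P" "g p1 = g p2"
    obtain i1 j1 i2 j2 where e: "p1 = (i1, j1)" "p2 = (i2, j2)" by (cases p1, cases p2)
    then have "1 \<le> i1" "1 \<le> i2" using p by (auto simp: P_def)
    then show "p1 = p2" using p(3) e by (auto simp: g_def)
  qed
  have cZ: "card Zall = card P + card J"
  proof -
    have "card Zall = card (g ` P) + card ((\<lambda>j. (Suc K, j)) ` J)"
      unfolding Zeq by (rule card_Un_disjoint) (use d1 finP finJ in auto)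
    also have "card (g ` P) = card P" by (rule card_image[OF i1])
    also have "card ((\<lambda>j. (Suc K, j)) ` J) = card J" by (rule card_image) (auto simp: inj_on_def)
    finally show ?thesis .
  qed
  have cJ1: "1 \<le> card J"
  proof (rule ccontr)
    assume "\<not> 1 \<le> card J"
    then have "card J = 0" by simp
    then have J0: "J = {}" using card_0_eq[OF finJ] by simp
    define T where "T = Scell N 1 K (\<lambda>e j. isgn (prv N 1 e v j))"
    have vT: "v \<in> T" using vR by (simp add: T_def Scell_def isgn_ok)
    have "T \<subseteq> {v}"
    proof
      fix z assume zT: "z \<in> T"
      have zR: "z \<in> Rn (dims N 0)" using zT by (simp add: T_def Scell_def)
      have zsi: "sign_ok (isgn (prv N 1 e v j)) (prv N 1 e z j)" if "e \<le> K" "j < dims N (1 + e)" for e j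
        using zT that unfolding T_def Scell_def by blast
      have zC: "z \<in> CC"
      proof -
        have "sign_ok (\<sigma> e j) (prv N 1 e z j)" if "e \<le> K" "j < dims N (1 + e)" for e j
        proof (rule sign_ok_isgn)
          show "sign_ok (isgn (prv N 1 e v j)) (prv N 1 e z j)" using zsi that by simp
          show "sign_ok (\<sigma> e j) (prv N 1 e v j)" using vC that unfolding Scell_def by blast
          show "\<sigma> e j \<in> {-1, 0, 1}" using sig by (simp add: sigv_def)
        qed
        then show ?thesis using zR by (simp add: Scell_def)
      qed
      have "z - v = 0"
      proof (rule ker)
        show "z - v \<in> Rn (dims N 0)" using zR vR by (rule Rn_minus)
        show "\<forall>z'\<in>Zall. Lf (fst z') (snd z') (z - v) = 0"
        proof
          fix z' assume z': "z' \<in> Zall"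
          obtain e j where ej: "z' = (e, j)" by (cases z')
          have h: "e \<le> Suc K" "j < dims N (1 + e)" "prv N 1 e v j = 0" using z' ej by (auto simp: Zall_def Iset_def)
          have eK: "e \<le> K"
          proof (rule ccontr)
            assume "\<not> e \<le> K"
            then have "e = Suc K" using h by simp
            then have "j \<in> J" using h by (simp add: J_def)
            then show False using J0 by simp
          qed
          have "prv N 1 e z j = 0" using zsi[OF eK h(2)] h(3) by (simp add: isgn_def sign_ok_def)
          moreover have "Lf e j (z - v) = prv N 1 e z j - prv N 1 e v j"
            using Lf_diff[of e j z v] C_LC[OF zC, of e] C_LC[OF vC, of e] eK by simp
          ultimately show "Lf (fst z') (snd z') (z - v) = 0" using h ej by simp
        qed
      qed
      then show "z \<in> {v}" by simp
    qed
    then have "T = {v}" using vT by auto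
    moreover have "T \<in> canon N 1 K" unfolding T_def
      by (rule Scell_canon) (use Kb vT in \<open>auto simp: sigv_isgn T_def\<close>)
    ultimately show False using vn by simp
  qed
  have Jsub: "J \<subseteq> {..<dims N (K+2)}" by (auto simp: J_def)
  have Psub: "P \<subseteq> {(i, j). 1 \<le> i \<and> i < K+2 \<and> j < dims N i}" by (auto simp: P_def)
  have cJ2: "card J \<le> dims N 0" using cZ c2 by simp
  have cP: "card P = dims N 0 - card J" using cZ c1 c2 by simp
  have vert: "\<exists>u. is_vertex u CC \<and> (\<forall>(i, j)\<in>P. node N i j u = 0)"
  proof -
    obtain u where u: "is_vertex u CC" "\<forall>e\<le>K. \<forall>j<dims N (1 + e). prv N 1 e v j = 0 \<longrightarrow> prv N 1 e u j = 0"
      using VERT[OF vC] by blast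
    have "node N i j u = 0" if "(i, j) \<in> P" for i j
    proof -
      have h: "1 \<le> i" "i < K + 2" "j < dims N i" "prv N 1 (i - 1) v j = 0" using that by (auto simp: P_def)
      then have "prv N 1 (i - 1) u j = 0" using u(2) by auto
      then show ?thesis using node_eq[of i j u] h by simp
    qed
    then show ?thesis using u(1) by auto
  qed
  have AJ: "A (K+2) j y = lino N 1 (mk \<sigma>) (Suc K) y j" if "j \<in> J" "y \<in> faff CC" for j y
    using A_eq[of "A (K+2) j" "K+2" j y] Ah that Jsub by auto
  have AP: "A i j y = lino N 1 (mk \<sigma>) (i - 1) y j" if "(i, j) \<in> P" "y \<in> faff CC" for i j y
    using A_eq[of "A i j" i j y] Ah that Psub by auto
  have sys: "{x \<in> faff CC. (\<forall>j\<in>J. A (K+2) j x = 0) \<and> (\<forall>(i, j)\<in>P. A i j x = 0)} = {v}"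
  proof
    show "{v} \<subseteq> {x \<in> faff CC. (\<forall>j\<in>J. A (K+2) j x = 0) \<and> (\<forall>(i, j)\<in>P. A i j x = 0)}"
    proof -
      have vf: "v \<in> faff CC" using vC faff_sub by blast
      have "\<forall>j\<in>J. A (K+2) j v = 0"
      proof
        fix j assume j: "j \<in> J"
        then show "A (K+2) j v = 0" using AJ[OF j vf] lv[of "Suc K" j] by (simp add: J_def)
      qed
      moreover have "\<forall>(i, j)\<in>P. A i j v = 0"
      proof clarify
        fix i j assume ij: "(i, j) \<in> P"
        then have "i - 1 \<le> Suc K" "prv N 1 (i - 1) v j = 0" by (auto simp: P_def)
        then show "A i j v = 0" using AP[OF ij vf] lv[of "i - 1" j] by simp
      qed
      ultimately show ?thesis using vf by blast
    qed
  next
    show "{x \<in> faff CC. (\<forall>j\<in>J. A (K+2) j x = 0) \<and> (\<forall>(i, j)\<in>P. A i j x = 0)} \<subseteq> {v}"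
    proof clarify
      fix x assume xf: "x \<in> faff CC" and xJ: "\<forall>j\<in>J. A (K+2) j x = 0" and xP: "\<forall>(i, j)\<in>P. A i j x = 0"
      have xR: "x \<in> Rn (dims N 0)" using faff_Rn[OF CRn] xf by auto
      have "x - v = 0"
      proof (rule ker)
        show "x - v \<in> Rn (dims N 0)" using xR vR by (rule Rn_minus)
        show "\<forall>z'\<in>Zall. Lf (fst z') (snd z') (x - v) = 0"
        proof
          fix z' assume z': "z' \<in> Zall"
          then have "z' \<in> g ` P \<union> (\<lambda>j. (Suc K, j)) ` J" using Zeq by simp
          then show "Lf (fst z') (snd z') (x - v) = 0"
          proof
            assume "z' \<in> g ` P"
            then obtain i j where ij: "(i, j) \<in> P" "z' = g (i, j)" by auto
            have h: "1 \<le> i" "i - 1 \<le> Suc K" "prv N 1 (i - 1) v j = 0" using ij(1) by (auto simp: P_def)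
            have "lino N 1 (mk \<sigma>) (i - 1) x j = 0" using AP[OF ij(1) xf] xP ij(1) by auto
            then show ?thesis using Lf_diff[of "i - 1" j x v] lv[OF h(2)] h ij(2) by (simp add: g_def)
          next
            assume "z' \<in> (\<lambda>j. (Suc K, j)) ` J"
            then obtain j where j: "j \<in> J" "z' = (Suc K, j)" by auto
            have "lino N 1 (mk \<sigma>) (Suc K) x j = 0" using AJ[OF j(1) xf] xJ j(1) by auto
            then show ?thesis using Lf_diff[of "Suc K" j x v] lv[of "Suc K" j] j by (simp add: J_def)
          qed
        qed
      qed
      then show "x = v" by simp
    qed
  qed
  show ?thesis using Jsub Psub cJ1 cJ2 cP vert sys by blast
qed

end

lemma canon_ne: "C \<in> canon N a d \<Longrightarrow> C \<noteq> {}"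
  by (cases d) (auto simp: hyp_cells_def)

lemma aform_afo: "aform n f \<Longrightarrow> affine_fun_on S f"
  unfolding affine_fun_on_def using aform_affine by blast

theorem lemma23:
  fixes N :: net and k :: nat and C :: "vect set"
  assumes wf: "wf_net N"
    and gen: "generic N"
    and st: "supertransversal N"
    and width: "dims N 0 \<le> dims N 1"
    and k: "2 \<le> k" "k \<le> depth N + 1"
    and C: "C \<in> canon N 1 (k - 2)"
  shows "(\<forall>i\<in>{1..k}. \<forall>j<dims N i.
            \<exists>A. affine_fun_on (faff C) A \<and> (\<forall>x\<in>C. A x = node N i j x))
       \<and> (\<forall>A :: nat \<Rightarrow> nat \<Rightarrow> vect \<Rightarrow> real.
           (\<forall>i\<in>{1..k}. \<forall>j<dims N i.
              affine_fun_on (faff C) (A i j) \<and> (\<forall>x\<in>C. A i j x = node N i j x)) \<longrightarrow>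
           (\<forall>v. {v} \<in> canon N 1 (k - 1) \<and> v \<in> closure C \<and> {v} \<notin> canon N 1 (k - 2) \<longrightarrow>
              (\<exists>J P. J \<subseteq> {..<dims N k} \<and> P \<subseteq> {(i, j). 1 \<le> i \<and> i < k \<and> j < dims N i} \<and>
                 1 \<le> card J \<and> card J \<le> dims N 0 \<and> card P = dims N 0 - card J \<and>
                 (\<exists>u. is_vertex u C \<and> (\<forall>(i, j)\<in>P. node N i j u = 0)) \<and>
                 {x \<in> faff C. (\<forall>j\<in>J. A k j x = 0) \<and> (\<forall>(i, j)\<in>P. A i j x = 0)} = {v}))
         \<and> (\<forall>J P x. J \<subseteq> {..<dims N k} \<and> P \<subseteq> {(i, j). 1 \<le> i \<and> i < k \<and> j < dims N i} \<and>
                 1 \<le> card J \<and> card J \<le> dims N 0 \<and> card P = dims N 0 - card J \<and>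
                 (\<exists>u. is_vertex u C \<and> (\<forall>(i, j)\<in>P. node N i j u = 0)) \<and>
                 {y \<in> faff C. (\<forall>j\<in>J. A k j y = 0) \<and> (\<forall>(i, j)\<in>P. A i j y = 0)} = {x} \<longrightarrow>
              (({x} \<in> canon N 1 (k - 1) \<and> x \<in> closure C) \<longleftrightarrow>
               (\<forall>i j. 1 \<le> i \<and> i \<le> k - 1 \<and> j < dims N i \<and> (i, j) \<notin> P \<longrightarrow>
                   sgn_pt N i j x = sgn_cell N i j C))))"
proof -
  define K where "K = k - 2"
  have kK: "k = K + 2" "k - 1 = Suc K" "k - 2 = K" using k(1) by (auto simp: K_def)
  have Kb: "K + 2 \<le> depth N + 1" using k(2) kK by simp
  obtain \<sigma> where sC: "sigv \<sigma>" "C = Scell N 1 K \<sigma>"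
    using canon_Scell[of 1 K N C] C Kb kK by auto
  have Cne: "Scell N 1 K \<sigma> \<noteq> {}" using canon_ne C sC by blast
  interpret S: setting N K \<sigma>
    by unfold_locales (use gen st width Kb sC(1) Cne in auto)
  have P0: "\<forall>i\<in>{1..k}. \<forall>j<dims N i. \<exists>A. affine_fun_on (faff C) A \<and> (\<forall>x\<in>C. A x = node N i j x)"
  proof (intro ballI allI impI)
    fix i j assume i: "i \<in> {1..k}" and j: "j < dims N i"
    show "\<exists>A. affine_fun_on (faff C) A \<and> (\<forall>x\<in>C. A x = node N i j x)"
    proof (intro exI conjI ballI)
      show "affine_fun_on (faff C) (\<lambda>x. lino N 1 (mk \<sigma>) (i - 1) x j)" by (rule aform_afo[OF S.afl])
      fix x assume "x \<in> C"
      then have xC: "x \<in> Scell N 1 K \<sigma>" using sC by simp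
      have e1: "node N i j x = prv N 1 (i - 1) x j" using i kK by (intro S.node_eq) auto
      have "i - 1 \<le> Suc K" using i kK by auto
      then have "prv N 1 (i - 1) x = lino N 1 (mk \<sigma>) (i - 1) x" by (rule S.C_LC[OF xC])
      then show "lino N 1 (mk \<sigma>) (i - 1) x j = node N i j x" using e1 by simp
    qed
  qed
  have P12: "(\<forall>v. {v} \<in> canon N 1 (k - 1) \<and> v \<in> closure C \<and> {v} \<notin> canon N 1 (k - 2) \<longrightarrow>
              (\<exists>J P. J \<subseteq> {..<dims N k} \<and> P \<subseteq> {(i, j). 1 \<le> i \<and> i < k \<and> j < dims N i} \<and>
                 1 \<le> card J \<and> card J \<le> dims N 0 \<and> card P = dims N 0 - card J \<and>
                 (\<exists>u. is_vertex u C \<and> (\<forall>(i, j)\<in>P. node N i j u = 0)) \<and>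
                 {x \<in> faff C. (\<forall>j\<in>J. A k j x = 0) \<and> (\<forall>(i, j)\<in>P. A i j x = 0)} = {v}))
         \<and> (\<forall>J P x. J \<subseteq> {..<dims N k} \<and> P \<subseteq> {(i, j). 1 \<le> i \<and> i < k \<and> j < dims N i} \<and>
                 1 \<le> card J \<and> card J \<le> dims N 0 \<and> card P = dims N 0 - card J \<and>
                 (\<exists>u. is_vertex u C \<and> (\<forall>(i, j)\<in>P. node N i j u = 0)) \<and>
                 {y \<in> faff C. (\<forall>j\<in>J. A k j y = 0) \<and> (\<forall>(i, j)\<in>P. A i j y = 0)} = {x} \<longrightarrow>
              (({x} \<in> canon N 1 (k - 1) \<and> x \<in> closure C) \<longleftrightarrow>
               (\<forall>i j. 1 \<le> i \<and> i \<le> k - 1 \<and> j < dims N i \<and> (i, j) \<notin> P \<longrightarrow>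
                   sgn_pt N i j x = sgn_cell N i j C)))"
    if Ah: "\<forall>i\<in>{1..k}. \<forall>j<dims N i. affine_fun_on (faff C) (A i j) \<and> (\<forall>x\<in>C. A i j x = node N i j x)"
    for A :: "nat \<Rightarrow> nat \<Rightarrow> vect \<Rightarrow> real"
  proof -
    have Ah': "\<forall>i\<in>{1..K+2}. \<forall>j<dims N i. affine_fun_on (faff (Scell N 1 K \<sigma>)) (A i j) \<and>
        (\<forall>x\<in>Scell N 1 K \<sigma>. A i j x = node N i j x)"
      using Ah kK sC by simp
    show ?thesis
    proof (intro conjI allI impI)
      fix v assume v: "{v} \<in> canon N 1 (k - 1) \<and> v \<in> closure C \<and> {v} \<notin> canon N 1 (k - 2)"
      show "\<exists>J P. J \<subseteq> {..<dims N k} \<and> P \<subseteq> {(i, j). 1 \<le> i \<and> i < k \<and> j < dims N i} \<and>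
                 1 \<le> card J \<and> card J \<le> dims N 0 \<and> card P = dims N 0 - card J \<and>
                 (\<exists>u. is_vertex u C \<and> (\<forall>(i, j)\<in>P. node N i j u = 0)) \<and>
                 {x \<in> faff C. (\<forall>j\<in>J. A k j x = 0) \<and> (\<forall>(i, j)\<in>P. A i j x = 0)} = {v}"
        using S.PART1[OF Ah'] v kK sC by simp
    next
      fix J P x
      assume h: "J \<subseteq> {..<dims N k} \<and> P \<subseteq> {(i, j). 1 \<le> i \<and> i < k \<and> j < dims N i} \<and>
                 1 \<le> card J \<and> card J \<le> dims N 0 \<and> card P = dims N 0 - card J \<and>
                 (\<exists>u. is_vertex u C \<and> (\<forall>(i, j)\<in>P. node N i j u = 0)) \<and>
                 {y \<in> faff C. (\<forall>j\<in>J. A k j y = 0) \<and> (\<forall>(i, j)\<in>P. A i j y = 0)} = {x}"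
      have r: "({x} \<in> canon N 1 (Suc K) \<and> x \<in> closure (Scell N 1 K \<sigma>)) \<longleftrightarrow>
         (\<forall>i j. 1 \<le> i \<and> i \<le> K + 1 \<and> j < dims N i \<and> (i, j) \<notin> P \<longrightarrow> sgn_pt N i j x = sgn_cell N i j (Scell N 1 K \<sigma>))"
      proof (rule S.PART2[OF Ah'])
        show "J \<subseteq> {..<dims N (K + 2)}" using h kK by simp
        show "P \<subseteq> {(i, j). 1 \<le> i \<and> i < K + 2 \<and> j < dims N i}" using h kK by simp
        show "1 \<le> card J" "card J \<le> dims N 0" "card P = dims N 0 - card J" using h by simp_all
        have h6: "{y \<in> faff C. (\<forall>j\<in>J. A k j y = 0) \<and> (\<forall>(i, j)\<in>P. A i j y = 0)} = {x}" using h by blast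
        then show "{y \<in> faff (Scell N 1 K \<sigma>). (\<forall>j\<in>J. A (K + 2) j y = 0) \<and> (\<forall>(i, j)\<in>P. A i j y = 0)} = {x}"
          unfolding kK(1) sC(2) .
      qed
      show "({x} \<in> canon N 1 (k - 1) \<and> x \<in> closure C) \<longleftrightarrow>
               (\<forall>i j. 1 \<le> i \<and> i \<le> k - 1 \<and> j < dims N i \<and> (i, j) \<notin> P \<longrightarrow>
                   sgn_pt N i j x = sgn_cell N i j C)"
        using r kK sC by simp
    qed
  qed
  show ?thesis using P0 P12 by blast
qed

end
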